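(* Let $G$ be a connected plane graph with no cycles of length $4$, $7$ or $9$, and let $C$ be a bad cycle of $G$. Then $|C|\in\{12,13\}$. Moreover, if $|C|=12$, then $C$ has a claw whose cells have lengths $\{3,5,10\}$, $\{5,5,8\}$ or $\{6,6,6\}$ (a $(3,5,10)$-claw, $(5,5,8)$-claw or $(6,6,6)$-claw); and if $|C|=13$, then $C$ has a claw whose cells have lengths $\{3,5,11\}$ (a $(3,5,11)$-claw) or a biclaw whose cells have lengths $\{5,5,5,8\}$ (a $(5,5,5,8)$-biclaw).
   Context: All graphs are finite and simple; a $k$-cycle is a cycle of length $k$ and a $13^-$-cycle is a cycle of length at most $13$. Let $C$ be a cycle in a plane graph $G$. If a vertex $v\notin V(C)$ has three neighbors $v_1,v_2,v_3$ on $C$, the subgraph formed by the edges $vv_1,vv_2,vv_3$ is called a claw of $C$. If $u_1,u_2\notin V(C)$ are adjacent and each $u_i$ has two neighbors $u_i',u_i''$ on $C$ (it is allowed that $\{u_1',u_1''\}\cap\{u_2',u_2''\}\neq\emptyset$), the subgraph formed by the edges $u_1u_2,u_1u_1',u_1u_1'',u_2u_2',u_2u_2''$ is called a biclaw of $C$. A claw or biclaw $H$ of $C$ divides the (open) disc bounded by $C$ on the side containing $H$ into regions; the boundary cycles of these regions (each consisting of a segment of $C$ and a path of $H$) are called the cells of the claw/biclaw. A $(c_1,c_2,c_3)$-claw (resp. $(c_1,c_2,c_3,c_4)$-biclaw) is a claw (resp. biclaw) whose cells have lengths $c_1,c_2,c_3$ (resp. $c_1,\dots,c_4$). A good cycle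 is a $13^-$-cycle that has neither claws nor biclaws; a bad cycle is a $13^-$-cycle that is not good. *)

theory Defs
  imports "HOL-Analysis.Analysis" "HOL-Library.Multiset"
begin

definition simple_graph :: "'a set \<Rightarrow> ('a \<Rightarrow> 'a \<Rightarrow> bool) \<Rightarrow> bool" where
  "simple_graph V E \<longleftrightarrow> finite V \<and> (\<forall>u v. E u v \<longrightarrow> u \<in> V \<and> v \<in> V \<and> u \<noteq> v \<and> E v u)"

definition connected_graph :: "'a set \<Rightarrow> ('a \<Rightarrow> 'a \<Rightarrow> bool) \<Rightarrow> bool" where
  "connected_graph V E \<longleftrightarrow> (\<forall>u\<in>V. \<forall>v\<in>V. E\<^sup>*\<^sup>* u v)"

definition plane_embedding ::
  "'a set \<Rightarrow> ('a \<Rightarrow> 'a \<Rightarrow> bool) \<Rightarrow> ('a \<Rightarrow> complex) \<Rightarrow> ('a \<Rightarrow> 'a \<Rightarrow> real \<Rightarrow> complex) \<Rightarrow> bool" where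
  "plane_embedding V E pos \<gamma> \<longleftrightarrow>
     inj_on pos V \<and>
     (\<forall>u v. E u v \<longrightarrow> arc (\<gamma> u v) \<and> pathstart (\<gamma> u v) = pos u \<and> pathfinish (\<gamma> u v) = pos v
                      \<and> path_image (\<gamma> v u) = path_image (\<gamma> u v)) \<and>
     (\<forall>u v w. E u v \<and> w \<in> V \<and> w \<noteq> u \<and> w \<noteq> v \<longrightarrow> pos w \<notin> path_image (\<gamma> u v)) \<and>
     (\<forall>u v x y. E u v \<and> E x y \<and> {u, v} \<noteq> {x, y} \<longrightarrow>
          path_image (\<gamma> u v) \<inter> path_image (\<gamma> x y) \<subseteq> pos ` ({u, v} \<inter> {x, y}))"

definition planar :: "'a set \<Rightarrow> ('a \<Rightarrow> 'a \<Rightarrow> bool) \<Rightarrow> bool" where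
  "planar V E \<longleftrightarrow> (\<exists>pos \<gamma>. plane_embedding V E pos \<gamma>)"

definition is_cycle :: "'a set \<Rightarrow> ('a \<Rightarrow> 'a \<Rightarrow> bool) \<Rightarrow> 'a list \<Rightarrow> bool" where
  "is_cycle V E C \<longleftrightarrow> length C \<ge> 3 \<and> distinct C \<and> set C \<subseteq> V \<and>
     (\<forall>i < length C. E (C ! i) (C ! ((i + 1) mod length C)))"

definition has_claw :: "'a set \<Rightarrow> ('a \<Rightarrow> 'a \<Rightarrow> bool) \<Rightarrow> 'a list \<Rightarrow> bool" where
  "has_claw V E C \<longleftrightarrow> (\<exists>v v1 v2 v3. v \<in> V \<and> v \<notin> set C \<and>
      v1 \<in> set C \<and> v2 \<in> set C \<and> v3 \<in> set C \<and> v1 \<noteq> v2 \<and> v1 \<noteq> v3 \<and> v2 \<noteq> v3 \<and>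
      E v v1 \<and> E v v2 \<and> E v v3)"

definition has_biclaw :: "'a set \<Rightarrow> ('a \<Rightarrow> 'a \<Rightarrow> bool) \<Rightarrow> 'a list \<Rightarrow> bool" where
  "has_biclaw V E C \<longleftrightarrow> (\<exists>u1 u2 a b c d. u1 \<in> V \<and> u2 \<in> V \<and> u1 \<notin> set C \<and> u2 \<notin> set C \<and>
      E u1 u2 \<and> a \<in> set C \<and> b \<in> set C \<and> c \<in> set C \<and> d \<in> set C \<and> a \<noteq> b \<and> c \<noteq> d \<and>
      E u1 a \<and> E u1 b \<and> E u2 c \<and> E u2 d)"

definition good_cycle :: "'a set \<Rightarrow> ('a \<Rightarrow> 'a \<Rightarrow> bool) \<Rightarrow> 'a list \<Rightarrow> bool" where
  "good_cycle V E C \<longleftrightarrow> is_cycle V E C \<and> length C \<le> 13 \<and> \<not> has_claw V E C \<and> \<not> has_biclaw V E C"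

definition bad_cycle :: "'a set \<Rightarrow> ('a \<Rightarrow> 'a \<Rightarrow> bool) \<Rightarrow> 'a list \<Rightarrow> bool" where
  "bad_cycle V E C \<longleftrightarrow> is_cycle V E C \<and> length C \<le> 13 \<and> \<not> good_cycle V E C"

text \<open>A claw with feet at positions i1 < i2 < i3 of C: its cells consist of the
  segment of C between consecutive feet plus the two claw edges.  M is the
  multiset of cell lengths.\<close>
definition has_typed_claw :: "'a set \<Rightarrow> ('a \<Rightarrow> 'a \<Rightarrow> bool) \<Rightarrow> 'a list \<Rightarrow> nat multiset \<Rightarrow> bool" where
  "has_typed_claw V E C M \<longleftrightarrow> (\<exists>v i1 i2 i3. v \<in> V \<and> v \<notin> set C \<and>
      i1 < i2 \<and> i2 < i3 \<and> i3 < length C \<and>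
      E v (C ! i1) \<and> E v (C ! i2) \<and> E v (C ! i3) \<and>
      M = {# i2 - i1 + 2, i3 - i2 + 2, length C + i1 - i3 + 2 #})"

text \<open>A biclaw u1u2 whose feet appear around C (in a plane graph necessarily
  non-interleaved) in the cyclic order u1', u1'', u2', u2'' at positions
  i1 < i2 \<le> i3 < i4 \<le> i1 + |C| (taken mod |C|; coincidences allowed).  The four
  cells are: segment u1'..u1'' + 2 edges, segment u1''..u2' + 3 edges
  (u1''u1, u1u2, u2u2'), segment u2'..u2'' + 2 edges, segment u2''..u1' + 3 edges.\<close>
definition has_typed_biclaw :: "'a set \<Rightarrow> ('a \<Rightarrow> 'a \<Rightarrow> bool) \<Rightarrow> 'a list \<Rightarrow> nat multiset \<Rightarrow> bool" where
  "has_typed_biclaw V E C M \<longleftrightarrow> (\<exists>u1 u2 i1 i2 i3 i4. u1 \<in> V \<and> u2 \<in> V \<and>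
      u1 \<notin> set C \<and> u2 \<notin> set C \<and> E u1 u2 \<and>
      i1 < length C \<and> i1 < i2 \<and> i2 \<le> i3 \<and> i3 < i4 \<and> i4 \<le> i1 + length C \<and>
      E u1 (C ! i1) \<and> E u1 (C ! (i2 mod length C)) \<and>
      E u2 (C ! (i3 mod length C)) \<and> E u2 (C ! (i4 mod length C)) \<and>
      M = {# i2 - i1 + 2, i3 - i2 + 3, i4 - i3 + 2, i1 + length C - i4 + 3 #})"

end

theory Submission
  imports Defs
begin


lemma side_in:
  fixes J K :: "complex set"
  assumes "closed J" "connected K" "K \<inter> J = {}" "w \<in> closure K" "w \<in> inside J"
  shows "K \<subseteq> inside J"
proof -
  have oi: "open (inside J)" and oo: "open (outside J)" using assms(1) open_inside open_outside by auto
  have "K \<subseteq> inside J \<union> outside J" using assms(3) by auto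
  moreover have "inside J \<inter> outside J \<inter> K = {}" by auto
  ultimately have "K \<subseteq> inside J \<or> K \<subseteq> outside J"
    using connectedD[OF assms(2) oi oo] by blast
  moreover have "\<not> K \<subseteq> outside J"
  proof
    assume "K \<subseteq> outside J"
    then have "w \<in> closure (outside J)" using assms(4) closure_mono by blast
    then have "inside J \<inter> outside J \<noteq> {}" using assms(5) oi
      by (meson disjoint_iff open_Int_closure_eq_empty)
    then show False by simp
  qed
  ultimately show ?thesis by blast
qed

lemma side_out:
  fixes J K :: "complex set"
  assumes "closed J" "connected K" "K \<inter> J = {}" "w \<in> closure K" "w \<in> outside J"
  shows "K \<subseteq> outside J"
proof -
  have oi: "open (inside J)" and oo: "open (outside J)" using assms(1) open_inside open_outside by auto
  have "K \<subseteq> inside J \<union> outside J" using assms(3) by auto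
  moreover have "inside J \<inter> outside J \<inter> K = {}" by auto
  ultimately have "K \<subseteq> inside J \<or> K \<subseteq> outside J"
    using connectedD[OF assms(2) oi oo] by blast
  moreover have "\<not> K \<subseteq> inside J"
  proof
    assume "K \<subseteq> inside J"
    then have "w \<in> closure (inside J)" using assms(4) closure_mono by blast
    then have "inside J \<inter> outside J \<noteq> {}" using assms(5) oo
      by (meson disjoint_iff open_Int_closure_eq_empty)
    then show False by simp
  qed
  ultimately show ?thesis by blast
qed

lemma side_either:
  fixes J :: "complex set"
  assumes "w \<notin> J" shows "w \<in> inside J \<or> w \<in> outside J"
  using assms inside_Un_outside by blast

lemma theta_inside_case:
  fixes X Y Z :: "real \<Rightarrow> complex"
  assumes arcs: "arc X" "arc Y" "arc Z"
    and ends: "pathstart X = p" "pathfinish X = q" "pathstart Y = p" "pathfinish Y = q"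
              "pathstart Z = p" "pathfinish Z = q"
    and XY: "path_image X \<inter> path_image Y = {p,q}"
    and XZ: "path_image X \<inter> path_image Z = {p,q}"
    and YZ: "path_image Y \<inter> path_image Z = {p,q}"
    and ne: "path_image Z \<inter> inside (path_image X \<union> path_image Y) \<noteq> {}"
    and K: "connected K" "K \<inter> (path_image X \<union> path_image Y \<union> path_image Z) = {}"
    and x: "x \<in> path_image X" "x \<notin> {p,q}" "x \<in> closure K"
    and y: "y \<in> path_image Y" "y \<notin> {p,q}" "y \<in> closure K"
    and z: "z \<in> path_image Z" "z \<notin> {p,q}" "z \<in> closure K"
  shows False
proof -
  have pq: "p \<noteq> q" using arcs(1) ends(1,2) arc_distinct_ends by metis
  obtain d1: "inside(path_image X \<union> path_image Z) \<inter> inside(path_image Y \<union> path_image Z) = {}"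
     and d2: "inside(path_image X \<union> path_image Z) \<union> inside(path_image Y \<union> path_image Z) \<union>
           (path_image Z - {p,q}) = inside(path_image X \<union> path_image Y)"
    using split_inside_simple_closed_curve[of X p q Y Z] arcs ends pq XY XZ YZ ne
    by (auto simp: arc_imp_simple_path)
  have cl: "closed (path_image A \<union> path_image B)" if "arc A" "arc B" for A B :: "real \<Rightarrow> complex"
    using that by (simp add: arc_imp_path closed_Un closed_path_image)
  have zin: "z \<in> inside (path_image X \<union> path_image Y)" using d2 z by auto
  have K1: "K \<subseteq> inside (path_image X \<union> path_image Y)"
    by (rule side_in[OF cl[OF arcs(1,2)] K(1) _ z(3) zin]) (use K(2) in auto)
  have K2: "K \<subseteq> inside(path_image X \<union> path_image Z) \<union> inside(path_image Y \<union> path_image Z)"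
    using K1 K(2) d2 by auto
  have "y \<notin> inside(path_image X \<union> path_image Z)"
  proof
    assume "y \<in> inside(path_image X \<union> path_image Z)"
    then have "y \<in> inside (path_image X \<union> path_image Y)" using d2 by auto
    then show False using y(1) inside_no_overlap by blast
  qed
  moreover have "y \<notin> path_image X \<union> path_image Z" using y XY YZ by auto
  ultimately have yout: "y \<in> outside(path_image X \<union> path_image Z)" using side_either by blast
  have K3: "K \<subseteq> outside (path_image X \<union> path_image Z)"
    by (rule side_out[OF cl[OF arcs(1,3)] K(1) _ y(3) yout]) (use K(2) in auto)
  have "x \<notin> inside(path_image Y \<union> path_image Z)"
  proof
    assume "x \<in> inside(path_image Y \<union> path_image Z)"
    then have "x \<in> inside (path_image X \<union> path_image Y)" using d2 by auto
    then show False using x(1) inside_no_overlap by blast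
  qed
  moreover have "x \<notin> path_image Y \<union> path_image Z" using x XY XZ by auto
  ultimately have xout: "x \<in> outside(path_image Y \<union> path_image Z)" using side_either by blast
  have K4: "K \<subseteq> outside (path_image Y \<union> path_image Z)"
    by (rule side_out[OF cl[OF arcs(2,3)] K(1) _ x(3) xout]) (use K(2) in auto)
  have "K \<noteq> {}" using x(3) by auto
  then show False using K2 K3 K4 inside_Int_outside by blast
qed

lemma theta_cycle:
  fixes X Y :: "real \<Rightarrow> complex"
  assumes "arc X" "arc Y" "pathstart X = p" "pathfinish X = q" "pathstart Y = p" "pathfinish Y = q"
    "path_image X \<inter> path_image Y = {p,q}"
  shows "inside (path_image X \<union> path_image Y) \<noteq> {} \<and>
         connected (inside (path_image X \<union> path_image Y)) \<and>
         connected (outside (path_image X \<union> path_image Y)) \<and>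
         frontier (inside (path_image X \<union> path_image Y)) = path_image X \<union> path_image Y"
proof -
  have sp: "simple_path (X +++ reversepath Y)"
    using assms by (auto simp: simple_path_join_loop_eq arc_simple_path simple_path_reversepath)
  have im: "path_image (X +++ reversepath Y) = path_image X \<union> path_image Y"
    using assms by (simp add: path_image_join)
  have "pathfinish (X +++ reversepath Y) = pathstart (X +++ reversepath Y)" using assms by simp
  from Jordan_inside_outside[OF sp this] show ?thesis unfolding im by blast
qed

lemma arc_mid:
  fixes X :: "real \<Rightarrow> complex"
  assumes "arc X" "pathstart X = p" "pathfinish X = q"
  shows "X (1/2) \<in> path_image X" "X (1/2) \<noteq> p" "X (1/2) \<noteq> q"
proof -
  have inj: "inj_on X {0..1}" using assms(1) arc_imp_inj_on by blast
  show "X (1/2) \<in> path_image X" by (simp add: path_image_def)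
  show "X (1/2) \<noteq> p"
  proof
    assume "X (1/2) = p"
    then have "X (1/2) = X 0" using assms(2) by (simp add: pathstart_def)
    then have "(1/2::real) = 0" using inj_onD[OF inj, of "1/2" 0] by simp
    then show False by simp
  qed
  show "X (1/2) \<noteq> q"
  proof
    assume "X (1/2) = q"
    then have "X (1/2) = X 1" using assms(3) by (simp add: pathfinish_def)
    then have "(1/2::real) = 1" using inj_onD[OF inj, of "1/2" 1] by simp
    then show False by simp
  qed
qed

lemma theta_all_outside:
  fixes X Y Z :: "real \<Rightarrow> complex"
  assumes arcs: "arc X" "arc Y" "arc Z"
    and ends: "pathstart X = p" "pathfinish X = q" "pathstart Y = p" "pathfinish Y = q"
              "pathstart Z = p" "pathfinish Z = q"
    and XY: "path_image X \<inter> path_image Y = {p,q}"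
    and XZ: "path_image X \<inter> path_image Z = {p,q}"
    and YZ: "path_image Y \<inter> path_image Z = {p,q}"
    and n1: "path_image Z \<inter> inside (path_image X \<union> path_image Y) = {}"
    and n2: "path_image X \<inter> inside (path_image Y \<union> path_image Z) = {}"
    and n3: "path_image Y \<inter> inside (path_image X \<union> path_image Z) = {}"
  shows False
proof -
  let ?X = "path_image X" and ?Y = "path_image Y" and ?Z = "path_image Z"
  have cl: "closed (path_image A \<union> path_image B)" if "arc A" "arc B" for A B :: "real \<Rightarrow> complex"
    using that by (simp add: arc_imp_path closed_Un closed_path_image)
  note cXY = theta_cycle[OF arcs(1,2) ends(1-4) XY]
  note cXZ = theta_cycle[OF arcs(1,3) ends(1,2,5,6) XZ]
  note cYZ = theta_cycle[OF arcs(2,3) ends(3-6) YZ]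
  let ?W = "inside (?X \<union> ?Y)"
  have Wc: "connected ?W" and Wne: "?W \<noteq> {}" using cXY by auto
  have WT: "?W \<inter> (?Y \<union> ?Z) = {}" "?W \<inter> (?X \<union> ?Z) = {}"
    using n1 inside_no_overlap[of "?X \<union> ?Y"] by blast+
  note mx = arc_mid[OF arcs(1) ends(1,2)]
  note my = arc_mid[OF arcs(2) ends(3,4)]
  have "X (1/2) \<in> closure ?W" using cXY mx(1) frontier_def by (metis Diff_iff UnI1)
  moreover have "X (1/2) \<in> outside (?Y \<union> ?Z)"
  proof -
    have "X (1/2) \<notin> ?Y \<union> ?Z" using mx XY XZ by blast
    moreover have "X (1/2) \<notin> inside (?Y \<union> ?Z)" using mx(1) n2 by blast
    ultimately show ?thesis using side_either by blast
  qed
  ultimately have W1: "?W \<subseteq> outside (?Y \<union> ?Z)"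
    using side_out[OF cl[OF arcs(2,3)] Wc WT(1)] by blast
  have "Y (1/2) \<in> closure ?W" using cXY my(1) frontier_def by (metis Diff_iff UnI2)
  moreover have "Y (1/2) \<in> outside (?X \<union> ?Z)"
  proof -
    have "Y (1/2) \<notin> ?X \<union> ?Z" using my XY YZ by blast
    moreover have "Y (1/2) \<notin> inside (?X \<union> ?Z)" using my(1) n3 by blast
    ultimately show ?thesis using side_either by blast
  qed
  ultimately have W2: "?W \<subseteq> outside (?X \<union> ?Z)"
    using side_out[OF cl[OF arcs(1,3)] Wc WT(2)] by blast
  obtain w where w: "w \<in> ?W" using Wne by blast
  have bd: "bounded (?X \<union> ?Y)" "bounded (?X \<union> ?Z)" "bounded (?Y \<union> ?Z)"
    using arcs by (simp_all add: arc_imp_path bounded_path_image bounded_Un)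
  have "bounded (- outside (?X \<union> ?Y) \<union> - outside (?X \<union> ?Z) \<union> - outside (?Y \<union> ?Z))"
    using bd cobounded_outside bounded_Un by metis
  then obtain f where "f \<notin> - outside (?X \<union> ?Y) \<union> - outside (?X \<union> ?Z) \<union> - outside (?Y \<union> ?Z)"
  proof -
    assume h: "\<And>f. f \<notin> - outside (?X \<union> ?Y) \<union> - outside (?X \<union> ?Z) \<union> - outside (?Y \<union> ?Z) \<Longrightarrow> thesis"
    show thesis
    proof (rule ccontr)
      assume "\<not> thesis"
      then have "UNIV \<subseteq> - outside (?X \<union> ?Y) \<union> - outside (?X \<union> ?Z) \<union> - outside (?Y \<union> ?Z)"
        using h by blast
      then show False using \<open>bounded (- outside (?X \<union> ?Y) \<union> - outside (?X \<union> ?Z) \<union> - outside (?Y \<union> ?Z))\<close>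
        not_bounded_UNIV bounded_subset by blast
    qed
  qed
  then have f: "f \<in> outside (?X \<union> ?Y)" "f \<in> outside (?X \<union> ?Z)" "f \<in> outside (?Y \<union> ?Z)" by auto
  have ccS: "connected_component (- (?Y \<union> ?Z)) w f"
    unfolding connected_component_def
    by (rule exI[of _ "outside (?Y \<union> ?Z)"]) (use cYZ W1 w f outside_no_overlap[of "?Y \<union> ?Z"] in blast)
  have ccT: "connected_component (- (?X \<union> ?Z)) w f"
    unfolding connected_component_def
    by (rule exI[of _ "outside (?X \<union> ?Z)"]) (use cXZ W2 w f outside_no_overlap[of "?X \<union> ?Z"] in blast)
  have "p \<in> ?Z" "q \<in> ?Z" using ends(5,6) pathstart_in_path_image pathfinish_in_path_image by metis+
  then have "(?Y \<union> ?Z) \<inter> (?X \<union> ?Z) = ?Z" using XY by auto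
  then have con: "connected ((?Y \<union> ?Z) \<inter> (?X \<union> ?Z))" using arcs(3) by (simp add: arc_imp_path connected_path_image)
  have "connected_component (- ((?Y \<union> ?Z) \<union> (?X \<union> ?Z))) w f"
    by (rule Janiszewski[OF _ _ con ccS ccT]) (use bd arcs in \<open>auto simp: arc_imp_path compact_path_image compact_Un closed_Un closed_path_image\<close>)
  then have "connected_component (- (?X \<union> ?Y)) w f"
    by (rule connected_component_of_subset) auto
  then obtain T where T: "connected T" "T \<subseteq> - (?X \<union> ?Y)" "w \<in> T" "f \<in> T"
    unfolding connected_component_def by blast
  have "T \<subseteq> inside (?X \<union> ?Y)"
    by (rule side_in[OF cl[OF arcs(1,2)] T(1) _ _ w]) (use T closure_subset in auto)
  then show False using T(4) f(1) inside_Int_outside by blast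
qed

lemma theta_contra:
  fixes X Y Z :: "real \<Rightarrow> complex"
  assumes arcs: "arc X" "arc Y" "arc Z"
    and ends: "pathstart X = p" "pathfinish X = q" "pathstart Y = p" "pathfinish Y = q"
              "pathstart Z = p" "pathfinish Z = q"
    and XY: "path_image X \<inter> path_image Y = {p,q}"
    and XZ: "path_image X \<inter> path_image Z = {p,q}"
    and YZ: "path_image Y \<inter> path_image Z = {p,q}"
    and K: "connected K" "K \<inter> (path_image X \<union> path_image Y \<union> path_image Z) = {}"
    and x: "x \<in> path_image X" "x \<notin> {p,q}" "x \<in> closure K"
    and y: "y \<in> path_image Y" "y \<notin> {p,q}" "y \<in> closure K"
    and z: "z \<in> path_image Z" "z \<notin> {p,q}" "z \<in> closure K"
  shows False
proof -
  have YX: "path_image Y \<inter> path_image X = {p,q}" and ZX: "path_image Z \<inter> path_image X = {p,q}"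
    and ZY: "path_image Z \<inter> path_image Y = {p,q}" using XY XZ YZ by auto
  have K1: "K \<inter> (path_image Y \<union> path_image Z \<union> path_image X) = {}"
    and K2: "K \<inter> (path_image X \<union> path_image Z \<union> path_image Y) = {}" using K(2) by auto
  consider "path_image Z \<inter> inside (path_image X \<union> path_image Y) \<noteq> {}"
    | "path_image X \<inter> inside (path_image Y \<union> path_image Z) \<noteq> {}"
    | "path_image Y \<inter> inside (path_image X \<union> path_image Z) \<noteq> {}"
    | "path_image Z \<inter> inside (path_image X \<union> path_image Y) = {}"
      "path_image X \<inter> inside (path_image Y \<union> path_image Z) = {}"
      "path_image Y \<inter> inside (path_image X \<union> path_image Z) = {}" by blast
  then show False
  proof cases
    case 1 then show ?thesis using theta_inside_case[OF arcs ends XY XZ YZ _ K x y z] by blast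
  next
    case 2 then show ?thesis
      using theta_inside_case[OF arcs(2,3,1) ends(3-6,1,2) YZ YX ZX _ K(1) K1 y z x] by blast
  next
    case 3 then show ?thesis
      using theta_inside_case[OF arcs(1,3,2) ends(1,2,5,6,3,4) XZ XY ZY _ K(1) K2 x z y] by blast
  next
    case 4 then show ?thesis using theta_all_outside[OF arcs ends XY XZ YZ] by blast
  qed
qed



fun walk :: "('a \<Rightarrow> 'a \<Rightarrow> bool) \<Rightarrow> 'a list \<Rightarrow> bool" where
  "walk E (x # y # r) = (E x y \<and> walk E (y # r))"
| "walk E _ = True"

fun edges :: "'a list \<Rightarrow> ('a \<times> 'a) set" where
  "edges (x # y # r) = insert (x, y) (edges (y # r))"
| "edges _ = {}"

fun vpath :: "('a \<Rightarrow> 'a \<Rightarrow> real \<Rightarrow> complex) \<Rightarrow> 'a list \<Rightarrow> real \<Rightarrow> complex" where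
  "vpath g (x # y # r) = (if r = [] then g x y else g x y +++ vpath g (y # r))"
| "vpath g _ = (\<lambda>t. 0)"

lemma edges_sub: "(u, v) \<in> edges L \<Longrightarrow> u \<in> set L \<and> v \<in> set L"
  by (induction L rule: edges.induct) auto

lemma edges_walk: "walk E L \<Longrightarrow> (u, v) \<in> edges L \<Longrightarrow> E u v"
  by (induction L rule: edges.induct) auto

lemma edges_cover: "length L \<ge> 2 \<Longrightarrow> w \<in> set L \<Longrightarrow> \<exists>u v. (u, v) \<in> edges L \<and> (w = u \<or> w = v)"
proof (induction L rule: edges.induct)
  case (1 x y r)
  then show ?case by (cases r) auto
qed auto

lemma vpath_props:
  assumes sg: "simple_graph V E" and pe: "plane_embedding V E pos \<gamma>"
  shows "distinct L \<Longrightarrow> length L \<ge> 2 \<Longrightarrow> walk E L \<Longrightarrow>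
    arc (vpath \<gamma> L) \<and> pathstart (vpath \<gamma> L) = pos (hd L) \<and> pathfinish (vpath \<gamma> L) = pos (last L) \<and>
    path_image (vpath \<gamma> L) = (\<Union>(u, v)\<in>edges L. path_image (\<gamma> u v))"
proof (induction L rule: edges.induct)
  case (1 x y r)
  have exy: "E x y" using 1 by simp
  have g: "arc (\<gamma> x y)" "pathstart (\<gamma> x y) = pos x" "pathfinish (\<gamma> x y) = pos y"
    using pe exy unfolding plane_embedding_def by blast+
  show ?case
  proof (cases "r = []")
    case True
    then show ?thesis using g by simp
  next
    case False
    have IH: "arc (vpath \<gamma> (y # r)) \<and> pathstart (vpath \<gamma> (y # r)) = pos y \<and>
        pathfinish (vpath \<gamma> (y # r)) = pos (last (y # r)) \<and>
        path_image (vpath \<gamma> (y # r)) = (\<Union>(u, v)\<in>edges (y # r). path_image (\<gamma> u v))"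
      using 1 False by (cases r) auto
    have xn: "x \<notin> set (y # r)" using 1 by simp
    have sub: "path_image (\<gamma> x y) \<inter> path_image (vpath \<gamma> (y # r)) \<subseteq> {pos y}"
    proof
      fix z assume z: "z \<in> path_image (\<gamma> x y) \<inter> path_image (vpath \<gamma> (y # r))"
      then obtain u v where uv: "(u, v) \<in> edges (y # r)" "z \<in> path_image (\<gamma> u v)" using IH by auto
      have "u \<in> set (y # r)" "v \<in> set (y # r)" using edges_sub[OF uv(1)] by auto
      then have ne: "{x, y} \<noteq> {u, v}" using xn by auto
      have "E u v" using edges_walk[OF _ uv(1), of E] 1(4) by simp
      then have "z \<in> pos ` ({x, y} \<inter> {u, v})" using pe exy ne z uv(2) unfolding plane_embedding_def by blast
      then show "z \<in> {pos y}" using xn \<open>u \<in> set (y # r)\<close> \<open>v \<in> set (y # r)\<close> by auto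
    qed
    have "arc (\<gamma> x y +++ vpath \<gamma> (y # r))"
      by (rule arc_join) (use g IH sub in auto)
    then show ?thesis using False g IH by (auto simp: path_image_join)
  qed
qed auto

lemma pe_edge: "plane_embedding V E pos \<gamma> \<Longrightarrow> E u v \<Longrightarrow>
   arc (\<gamma> u v) \<and> pathstart (\<gamma> u v) = pos u \<and> pathfinish (\<gamma> u v) = pos v \<and> path_image (\<gamma> v u) = path_image (\<gamma> u v)"
  unfolding plane_embedding_def by blast

lemma pe_vert: "plane_embedding V E pos \<gamma> \<Longrightarrow> E u v \<Longrightarrow> w \<in> V \<Longrightarrow> w \<noteq> u \<Longrightarrow> w \<noteq> v \<Longrightarrow>
   pos w \<notin> path_image (\<gamma> u v)"
  unfolding plane_embedding_def by blast

lemma pe_cross: "plane_embedding V E pos \<gamma> \<Longrightarrow> E u v \<Longrightarrow> E x y \<Longrightarrow> {u, v} \<noteq> {x, y} \<Longrightarrow>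
   path_image (\<gamma> u v) \<inter> path_image (\<gamma> x y) \<subseteq> pos ` ({u, v} \<inter> {x, y})"
  unfolding plane_embedding_def by blast

lemma pe_inj: "plane_embedding V E pos \<gamma> \<Longrightarrow> inj_on pos V"
  unfolding plane_embedding_def by blast

lemma vpath_image:
  assumes "simple_graph V E" "plane_embedding V E pos \<gamma>" "distinct L" "length L \<ge> 2" "walk E L"
  shows "path_image (vpath \<gamma> L) = (\<Union>(u, v)\<in>edges L. path_image (\<gamma> u v))"
  using vpath_props[OF assms(1,2)] assms(3-5) by blast

lemma vpath_inter:
  assumes sg: "simple_graph V E" and pe: "plane_embedding V E pos \<gamma>"
    and L1: "distinct L1" "length L1 \<ge> 2" "walk E L1"
    and L2: "distinct L2" "length L2 \<ge> 2" "walk E L2"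
    and ne: "\<forall>(u, v)\<in>edges L1. u \<notin> set L2 \<or> v \<notin> set L2"
  shows "path_image (vpath \<gamma> L1) \<inter> path_image (vpath \<gamma> L2) \<subseteq> pos ` (set L1 \<inter> set L2)"
proof
  fix z assume z: "z \<in> path_image (vpath \<gamma> L1) \<inter> path_image (vpath \<gamma> L2)"
  have e1: "path_image (vpath \<gamma> L1) = (\<Union>(u, v)\<in>edges L1. path_image (\<gamma> u v))" by (rule vpath_image[OF sg pe L1])
  have e2: "path_image (vpath \<gamma> L2) = (\<Union>(u, v)\<in>edges L2. path_image (\<gamma> u v))" by (rule vpath_image[OF sg pe L2])
  have "z \<in> (\<Union>(u, v)\<in>edges L1. path_image (\<gamma> u v))" using IntD1[OF z] unfolding e1 .
  then obtain u v where uv: "(u, v) \<in> edges L1" "z \<in> path_image (\<gamma> u v)" by auto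
  have "z \<in> (\<Union>(u, v)\<in>edges L2. path_image (\<gamma> u v))" using IntD2[OF z] unfolding e2 .
  then obtain s t where st: "(s, t) \<in> edges L2" "z \<in> path_image (\<gamma> s t)" by auto
  have "s \<in> set L2" "t \<in> set L2" using edges_sub[OF st(1)] by auto
  moreover have "u \<notin> set L2 \<or> v \<notin> set L2" using ne uv(1) by fast
  ultimately have "{u, v} \<noteq> {s, t}" by (metis doubleton_eq_iff)
  moreover have "E u v" using edges_walk[OF L1(3) uv(1)] .
  moreover have "E s t" using edges_walk[OF L2(3) st(1)] .
  ultimately have "z \<in> pos ` ({u, v} \<inter> {s, t})" using pe_cross[OF pe, of u v s t] uv(2) st(2) by blast
  moreover have "{u, v} \<inter> {s, t} \<subseteq> set L1 \<inter> set L2" using edges_sub[OF uv(1)] edges_sub[OF st(1)] by blast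
  ultimately show "z \<in> pos ` (set L1 \<inter> set L2)" by blast
qed

lemma vpath_vertex_out:
  assumes sg: "simple_graph V E" and pe: "plane_embedding V E pos \<gamma>"
    and L: "distinct L" "length L \<ge> 2" "walk E L" and w: "w \<in> V" "w \<notin> set L"
  shows "pos w \<notin> path_image (vpath \<gamma> L)"
proof
  assume "pos w \<in> path_image (vpath \<gamma> L)"
  then have "pos w \<in> (\<Union>(u, v)\<in>edges L. path_image (\<gamma> u v))" unfolding vpath_image[OF sg pe L] .
  then obtain u v where uv: "(u, v) \<in> edges L" "pos w \<in> path_image (\<gamma> u v)" by auto
  have "w \<noteq> u" "w \<noteq> v" using edges_sub[OF uv(1)] w by auto
  moreover have "E u v" using edges_walk[OF L(3) uv(1)] .
  ultimately show False using pe_vert[OF pe] w uv(2) by blast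
qed

lemma vpath_vertex_in:
  assumes sg: "simple_graph V E" and pe: "plane_embedding V E pos \<gamma>"
    and L: "distinct L" "length L \<ge> 2" "walk E L" and w: "w \<in> set L"
  shows "pos w \<in> path_image (vpath \<gamma> L)"
proof -
  obtain u v where uv: "(u, v) \<in> edges L" "w = u \<or> w = v" using edges_cover[OF L(2) w] by blast
  have "E u v" using edges_walk[OF L(3) uv(1)] .
  then have "pos u \<in> path_image (\<gamma> u v)" "pos v \<in> path_image (\<gamma> u v)"
    using pe_edge[OF pe]
    by (metis pathstart_in_path_image pathfinish_in_path_image)+
  then have "pos w \<in> (\<Union>(u, v)\<in>edges L. path_image (\<gamma> u v))" using uv by auto
  then show ?thesis unfolding vpath_image[OF sg pe L] .
qed



lemma walk_nth: "walk E L \<longleftrightarrow> (\<forall>k. Suc k < length L \<longrightarrow> E (L ! k) (L ! Suc k))"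
proof (induction L)
  case Nil then show ?case by simp
next
  case (Cons x r)
  show ?case
  proof (cases r)
    case Nil then show ?thesis by simp
  next
    case (Cons y r')
    have "walk E (x # r) \<longleftrightarrow> E x y \<and> (\<forall>k. Suc k < length r \<longrightarrow> E (r ! k) (r ! Suc k))"
      using Cons.IH Cons by simp
    also have "\<dots> \<longleftrightarrow> (\<forall>k. Suc k < length (x # r) \<longrightarrow> E ((x # r) ! k) ((x # r) ! Suc k))"
    proof
      assume h: "E x y \<and> (\<forall>k. Suc k < length r \<longrightarrow> E (r ! k) (r ! Suc k))"
      show "\<forall>k. Suc k < length (x # r) \<longrightarrow> E ((x # r) ! k) ((x # r) ! Suc k)"
      proof (intro allI impI)
        fix k assume "Suc k < length (x # r)"
        then show "E ((x # r) ! k) ((x # r) ! Suc k)" using h Cons by (cases k) auto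
      qed
    next
      assume h: "\<forall>k. Suc k < length (x # r) \<longrightarrow> E ((x # r) ! k) ((x # r) ! Suc k)"
      have "E x y" using h[rule_format, of 0] Cons by simp
      moreover have "\<forall>k. Suc k < length r \<longrightarrow> E (r ! k) (r ! Suc k)"
      proof (intro allI impI)
        fix k assume "Suc k < length r"
        then show "E (r ! k) (r ! Suc k)" using h[rule_format, of "Suc k"] by simp
      qed
      ultimately show "E x y \<and> (\<forall>k. Suc k < length r \<longrightarrow> E (r ! k) (r ! Suc k))" by blast
    qed
    finally show ?thesis .
  qed
qed

lemma edges_nth: "edges L = {(L ! k, L ! Suc k) | k. Suc k < length L}"
proof (induction L rule: edges.induct)
  case (1 x y r)
  have "{((x # y # r) ! k, (x # y # r) ! Suc k) | k. Suc k < length (x # y # r)} =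
        insert (x, y) {((y # r) ! k, (y # r) ! Suc k) | k. Suc k < length (y # r)}"
  proof (rule set_eqI, rule iffI)
    fix p assume "p \<in> {((x # y # r) ! k, (x # y # r) ! Suc k) | k. Suc k < length (x # y # r)}"
    then obtain k where k: "p = ((x # y # r) ! k, (x # y # r) ! Suc k)" "Suc k < length (x # y # r)" by blast
    show "p \<in> insert (x, y) {((y # r) ! k, (y # r) ! Suc k) | k. Suc k < length (y # r)}"
    proof (cases k)
      case 0 then show ?thesis using k by simp
    next
      case (Suc j) then show ?thesis using k by auto
    qed
  next
    fix p assume "p \<in> insert (x, y) {((y # r) ! k, (y # r) ! Suc k) | k. Suc k < length (y # r)}"
    then show "p \<in> {((x # y # r) ! k, (x # y # r) ! Suc k) | k. Suc k < length (x # y # r)}"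
    proof
      assume "p = (x, y)" then show ?thesis by (intro CollectI exI[of _ 0]) simp
    next
      assume "p \<in> {((y # r) ! k, (y # r) ! Suc k) | k. Suc k < length (y # r)}"
      then obtain k where k: "p = ((y # r) ! k, (y # r) ! Suc k)" "Suc k < length (y # r)" by blast
      then show ?thesis by (intro CollectI exI[of _ "Suc k"]) simp
    qed
  qed
  then show ?case using 1 by simp
next
  case ("2_1")
  then show ?case by simp
next
  case ("2_2" v)
  then show ?case by simp
qed

lemma walk_Cons: "walk E (x # r) \<longleftrightarrow> walk E r \<and> (r \<noteq> [] \<longrightarrow> E x (hd r))"
  by (cases r) auto

lemma walk_append: "walk E (xs @ ys) \<longleftrightarrow> walk E xs \<and> walk E ys \<and> (xs \<noteq> [] \<and> ys \<noteq> [] \<longrightarrow> E (last xs) (hd ys))"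
proof (induction xs)
  case Nil then show ?case by simp
next
  case (Cons x r) then show ?case by (cases r) (auto simp: walk_Cons)
qed

lemma is_cycle_alt:
  "is_cycle V E L \<longleftrightarrow> 3 \<le> length L \<and> distinct L \<and> set L \<subseteq> V \<and> walk E L \<and> E (last L) (hd L)"
proof -
  have "(\<forall>i < length L. E (L ! i) (L ! ((i + 1) mod length L))) \<longleftrightarrow> walk E L \<and> E (last L) (hd L)"
    if "3 \<le> length L"
  proof -
    have a: "(\<forall>i < length L. E (L ! i) (L ! ((i + 1) mod length L))) \<longleftrightarrow>
       (\<forall>k. Suc k < length L \<longrightarrow> E (L ! k) (L ! Suc k)) \<and> E (L ! (length L - 1)) (L ! 0)"
    proof
      assume h: "\<forall>i < length L. E (L ! i) (L ! ((i + 1) mod length L))"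
      have "Suc (length L - 1) = length L" using that by simp
      then have "E (L ! (length L - 1)) (L ! 0)" using h[rule_format, of "length L - 1"] that by simp
      moreover have "\<forall>k. Suc k < length L \<longrightarrow> E (L ! k) (L ! Suc k)"
        using h by (metis Suc_eq_plus1 Suc_lessD mod_less)
      ultimately show "(\<forall>k. Suc k < length L \<longrightarrow> E (L ! k) (L ! Suc k)) \<and> E (L ! (length L - 1)) (L ! 0)" by blast
    next
      assume h: "(\<forall>k. Suc k < length L \<longrightarrow> E (L ! k) (L ! Suc k)) \<and> E (L ! (length L - 1)) (L ! 0)"
      show "\<forall>i < length L. E (L ! i) (L ! ((i + 1) mod length L))"
      proof (intro allI impI)
        fix i assume i: "i < length L"
        show "E (L ! i) (L ! ((i + 1) mod length L))"
        proof (cases "Suc i < length L")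
          case True then show ?thesis using h by simp
        next
          case False then have i1: "i = length L - 1" "Suc i = length L" using i by auto
          then have "(i + 1) mod length L = 0" by simp
          then show ?thesis using h i1(1) by simp
        qed
      qed
    qed
    have "L \<noteq> []" using that by auto
    then have "last L = L ! (length L - 1)" "hd L = L ! 0" by (simp_all add: last_conv_nth hd_conv_nth)
    then show ?thesis using a walk_nth by metis
  qed
  then show ?thesis unfolding is_cycle_def by blast
qed

lemma cycle_append:
  assumes "3 \<le> length P + length S" "P \<noteq> []" "S \<noteq> []" "distinct P" "distinct S" "set P \<inter> set S = {}"
    "set P \<subseteq> V" "set S \<subseteq> V" "walk E P" "walk E S" "E (last P) (hd S)" "E (last S) (hd P)"
  shows "is_cycle V E (P @ S)"
  unfolding is_cycle_alt using assms by (auto simp: walk_append)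



definition seg :: "'a list \<Rightarrow> nat \<Rightarrow> nat \<Rightarrow> 'a list" where
  "seg C i m = map (\<lambda>t. C ! ((i + t) mod length C)) [0..<Suc m]"

definition DD :: "nat \<Rightarrow> nat \<Rightarrow> nat \<Rightarrow> nat" where
  "DD n x y = (y + n - x) mod n"

lemma mod_lt2: "m < 2 * n \<Longrightarrow> (m::nat) mod n = (if m < n then m else m - n)"
proof (cases "m < n")
  case True then show ?thesis by simp
next
  case False
  assume "m < 2 * n"
  then have "m - n < n" using False by simp
  then have "(m - n) mod n = m - n" by simp
  moreover have "m mod n = (m - n) mod n" using False le_mod_geq by (simp add: not_less)
  ultimately show ?thesis using False by simp
qed
lemma mod_cancel_lt: "(i + t) mod n = (i + s) mod (n::nat) \<Longrightarrow> t < n \<Longrightarrow> s < n \<Longrightarrow> t = s"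
proof -
  assume h: "(i + t) mod n = (i + s) mod (n::nat)" "t < n" "s < n"
  let ?j = "i mod n"
  have j: "?j < n" using h by simp
  have e: "(?j + t) mod n = (?j + s) mod n" using h(1) by (simp add: mod_add_left_eq)
  have a: "(?j + t) mod n = (if ?j + t < n then ?j + t else ?j + t - n)"
    using j h(2) by (intro mod_lt2) linarith
  have b: "(?j + s) mod n = (if ?j + s < n then ?j + s else ?j + s - n)"
    using j h(3) by (intro mod_lt2) linarith
  show "t = s" using e a b j h(2,3) by (simp split: if_splits)
qed
lemma DD_zero0: "x < n \<Longrightarrow> y < (n::nat) \<Longrightarrow> (y + n - x) mod n = 0 \<longleftrightarrow> x = y"
proof -
  assume "x < n" "y < n"
  then have "(y + n - x) mod n = (if y + n - x < n then y + n - x else y + n - x - n)"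
    by (intro mod_lt2) simp
  then show ?thesis using \<open>x < n\<close> \<open>y < n\<close> by (auto split: if_splits)
qed
lemma DD_add0: "x < n \<Longrightarrow> y < (n::nat) \<Longrightarrow> (x + (y + n - x) mod n) mod n = y"
  by (simp add: mod_add_right_eq)

lemma DD_add: "x < n \<Longrightarrow> y < n \<Longrightarrow> (x + DD n x y) mod n = y"
  unfolding DD_def by (rule DD_add0)

lemma DD_zero: "x < n \<Longrightarrow> y < n \<Longrightarrow> DD n x y = 0 \<longleftrightarrow> x = y"
  unfolding DD_def by (rule DD_zero0)

lemma DD_less: "0 < n \<Longrightarrow> DD n x y < n" unfolding DD_def by simp

lemma seg_len[simp]: "length (seg C i m) = Suc m" by (simp add: seg_def)

lemma seg_nth: "t \<le> m \<Longrightarrow> seg C i m ! t = C ! ((i + t) mod length C)"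
  by (simp add: seg_def less_Suc_eq_le del: upt_Suc)

lemma seg_hd: "hd (seg C i m) = C ! (i mod length C)"
  by (simp add: seg_def upt_conv_Cons del: upt_Suc)

lemma seg_last: "last (seg C i m) = C ! ((i + m) mod length C)"
  by (simp add: seg_def last_map)

lemma seg_set: "set (seg C i m) = {C ! ((i + t) mod length C) | t. t \<le> m}"
  by (auto simp: seg_def less_Suc_eq_le image_iff simp del: upt_Suc)

lemma seg_distinct:
  assumes "distinct C" "m < length C" shows "distinct (seg C i m)"
proof -
  have "inj_on (\<lambda>t. C ! ((i + t) mod length C)) {0..<Suc m}"
  proof (rule inj_onI)
    fix t s assume ts: "t \<in> {0..<Suc m}" "s \<in> {0..<Suc m}" "C ! ((i + t) mod length C) = C ! ((i + s) mod length C)"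
    have n: "0 < length C" using assms(2) by (rule le_less_trans[OF le0])
    then have l: "(i + t) mod length C < length C" "(i + s) mod length C < length C" by simp_all
    have "(i + t) mod length C = (i + s) mod length C"
      using nth_eq_iff_index_eq[OF assms(1) l] ts(3) by simp
    moreover have "t < length C" "s < length C" using ts(1,2) assms(2) by auto
    ultimately show "t = s" by (rule mod_cancel_lt)
  qed
  then show ?thesis by (simp add: seg_def distinct_map del: upt_Suc)
qed

lemma seg_walk:
  assumes "is_cycle V E C" shows "walk E (seg C i m)"
  unfolding walk_nth
proof (intro allI impI)
  fix k assume k: "Suc k < length (seg C i m)"
  let ?n = "length C"
  have n: "0 < ?n" using assms by (auto simp: is_cycle_def)
  have "E (C ! ((i + k) mod ?n)) (C ! (((i + k) mod ?n + 1) mod ?n))"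
    using assms n unfolding is_cycle_def by auto
  moreover have "((i + k) mod ?n + 1) mod ?n = (i + Suc k) mod ?n" by (simp add: mod_Suc_eq)
  ultimately show "E (seg C i m ! k) (seg C i m ! Suc k)" using k by (simp add: seg_nth)
qed

lemma seg_edges: "edges (seg C i m) = {(C ! ((i + t) mod length C), C ! ((i + Suc t) mod length C)) | t. t < m}"
  unfolding edges_nth
proof (rule set_eqI, rule iffI)
  fix p assume "p \<in> {(seg C i m ! k, seg C i m ! Suc k) |k. Suc k < length (seg C i m)}"
  then show "p \<in> {(C ! ((i + t) mod length C), C ! ((i + Suc t) mod length C)) | t. t < m}"
    by (auto simp: seg_nth)
next
  fix p assume "p \<in> {(C ! ((i + t) mod length C), C ! ((i + Suc t) mod length C)) | t. t < m}"
  then obtain t where t: "p = (C ! ((i + t) mod length C), C ! ((i + Suc t) mod length C))" "t < m" by blast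
  then have "p = (seg C i m ! t, seg C i m ! Suc t)" "Suc t < length (seg C i m)" by (auto simp: seg_nth)
  then show "p \<in> {(seg C i m ! k, seg C i m ! Suc k) |k. Suc k < length (seg C i m)}" by blast
qed

lemma seg_ne: "seg C i m \<noteq> []"
  by (metis seg_len Zero_not_Suc list.size(3))

lemma nth_mod_mem: "0 < length C \<Longrightarrow> C ! (j mod length C) \<in> set C"
  by simp

lemma seg_subV: "is_cycle V E C \<Longrightarrow> set (seg C i m) \<subseteq> V"
  unfolding seg_set is_cycle_def using nth_mod_mem[of C] by fastforce

lemma apex_cycle:
  assumes sg: "simple_graph V E" and cyc: "is_cycle V E C" and v: "v \<in> V" "v \<notin> set C"
    and m: "1 \<le> m" "m < length C" and i: "i < length C"
    and e1: "E v (C ! i)" and e2: "E v (C ! ((i + m) mod length C))"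
  shows "is_cycle V E (v # seg C i m)" "length (v # seg C i m) = m + 2"
proof -
  have "set (seg C i m) \<subseteq> set C" unfolding seg_set using cyc nth_mod_mem[of C] by (fastforce simp: is_cycle_def)
  then have "is_cycle V E ([v] @ seg C i m)"
    using sg cyc v m i e1 e2
    by (intro cycle_append) (auto simp: seg_distinct is_cycle_def seg_walk seg_subV seg_hd seg_last simple_graph_def seg_ne)
  then show "is_cycle V E (v # seg C i m)" by simp
  show "length (v # seg C i m) = m + 2" by simp
qed

lemma apex2_cycle:
  assumes sg: "simple_graph V E" and cyc: "is_cycle V E C" and u: "u1 \<in> V" "u1 \<notin> set C" "u2 \<in> V" "u2 \<notin> set C"
    and e0: "E u1 u2" and m: "m < length C" and i: "i < length C"
    and e1: "E u2 (C ! i)" and e2: "E u1 (C ! ((i + m) mod length C))"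
  shows "is_cycle V E (u1 # u2 # seg C i m)" "length (u1 # u2 # seg C i m) = m + 3"
proof -
  have "set (seg C i m) \<subseteq> set C" unfolding seg_set using cyc nth_mod_mem[of C] by (fastforce simp: is_cycle_def)
  moreover have "u1 \<noteq> u2" using sg e0 by (auto simp: simple_graph_def)
  ultimately have "is_cycle V E ([u1, u2] @ seg C i m)"
    using sg cyc u m i e0 e1 e2
    by (intro cycle_append) (auto simp: seg_distinct is_cycle_def seg_walk seg_subV seg_hd seg_last simple_graph_def seg_ne)
  then show "is_cycle V E (u1 # u2 # seg C i m)" by simp
  show "length (u1 # u2 # seg C i m) = m + 3" by simp
qed



lemma setX:
  assumes "ia \<le> ib" "ib < length C"
  shows "set (seg C ia (ib - ia)) = {C ! j | j. ia \<le> j \<and> j \<le> ib}"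
proof -
  have "{C ! ((ia + t) mod length C) | t. t \<le> ib - ia} = {C ! j | j. ia \<le> j \<and> j \<le> ib}"
  proof (rule set_eqI, rule iffI)
    fix x assume "x \<in> {C ! ((ia + t) mod length C) | t. t \<le> ib - ia}"
    then obtain t where t: "x = C ! ((ia + t) mod length C)" "t \<le> ib - ia" by blast
    then have "(ia + t) mod length C = ia + t" using assms by simp
    then show "x \<in> {C ! j | j. ia \<le> j \<and> j \<le> ib}" using t assms by (intro CollectI exI[of _ "ia + t"]) simp
  next
    fix x assume "x \<in> {C ! j | j. ia \<le> j \<and> j \<le> ib}"
    then obtain j where j: "x = C ! j" "ia \<le> j" "j \<le> ib" by blast
    then have "(ia + (j - ia)) mod length C = j" using assms by simp
    then show "x \<in> {C ! ((ia + t) mod length C) | t. t \<le> ib - ia}" using j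
      by (intro CollectI exI[of _ "j - ia"]) simp
  qed
  then show ?thesis by (simp add: seg_set)
qed

lemma setY:
  assumes "ia < ib" "ib < length C"
  shows "set (seg C ib (length C - ib + ia)) = {C ! j | j. j < length C \<and> (ib \<le> j \<or> j \<le> ia)}"
proof -
  let ?n = "length C"
  have "{C ! ((ib + t) mod ?n) | t. t \<le> ?n - ib + ia} = {C ! j | j. j < ?n \<and> (ib \<le> j \<or> j \<le> ia)}"
  proof (rule set_eqI, rule iffI)
    fix x assume "x \<in> {C ! ((ib + t) mod ?n) | t. t \<le> ?n - ib + ia}"
    then obtain t where t: "x = C ! ((ib + t) mod ?n)" "t \<le> ?n - ib + ia" by blast
    have lt: "ib + t < 2 * ?n" using t(2) assms by linarith
    have m: "(ib + t) mod ?n = (if ib + t < ?n then ib + t else ib + t - ?n)" by (rule mod_lt2[OF lt])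
    have "(ib + t) mod ?n < ?n \<and> (ib \<le> (ib + t) mod ?n \<or> (ib + t) mod ?n \<le> ia)"
      using t(2) assms unfolding m by auto
    then show "x \<in> {C ! j | j. j < ?n \<and> (ib \<le> j \<or> j \<le> ia)}" using t(1) by blast
  next
    fix x assume "x \<in> {C ! j | j. j < ?n \<and> (ib \<le> j \<or> j \<le> ia)}"
    then obtain j where j: "x = C ! j" "j < ?n" "ib \<le> j \<or> j \<le> ia" by blast
    show "x \<in> {C ! ((ib + t) mod ?n) | t. t \<le> ?n - ib + ia}"
    proof (cases "ib \<le> j")
      case True
      then have "(ib + (j - ib)) mod ?n = j" "j - ib \<le> ?n - ib + ia" using j assms by auto
      then show ?thesis using j(1) by (intro CollectI exI[of _ "j - ib"]) simp
    next
      case False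
      then have jj: "j \<le> ia" using j by simp
      have "ib + (j + ?n - ib) = j + ?n" using assms by simp
      then have "(ib + (j + ?n - ib)) mod ?n = j" using j(2) by simp
      moreover have "j + ?n - ib \<le> ?n - ib + ia" using jj assms by simp
      ultimately show ?thesis using j(1) by (intro CollectI exI[of _ "j + ?n - ib"]) simp
    qed
  qed
  then show ?thesis by (simp add: seg_set)
qed

lemma interleave_contra:
  assumes sg: "simple_graph V E" and pe: "plane_embedding V E pos \<gamma>" and cyc: "is_cycle V E C"
    and u: "u1 \<in> V" "u1 \<notin> set C" "u2 \<in> V" "u2 \<notin> set C" "E u1 u2"
    and idx: "ia < ic" "ic < ib" "ib < idd" "idd < length C"
    and e: "E u1 (C ! ia)" "E u1 (C ! ib)" "E u2 (C ! ic)" "E u2 (C ! idd)"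
  shows False
proof -
  let ?n = "length C"
  define a where "a = C ! ia"
  define b where "b = C ! ib"
  define c where "c = C ! ic"
  define d where "d = C ! idd"
  have dC: "distinct C" and CV: "set C \<subseteq> V" using cyc by (auto simp: is_cycle_def)
  have symE: "E y x" if "E x y" for x y using sg that by (auto simp: simple_graph_def)
  have inj: "inj_on pos V" using pe_inj[OF pe] .
  have Cinj: "C ! j = C ! k \<longleftrightarrow> j = k" if "j < ?n" "k < ?n" for j k
    using nth_eq_iff_index_eq[OF dC that] .
  have mem: "C ! j \<in> set C" if "j < ?n" for j using that by simp
  have inV: "C ! j \<in> V" if "j < ?n" for j using CV mem that by blast
  have u12: "u1 \<noteq> u2" using sg u(5) by (auto simp: simple_graph_def)
  have abcd: "a \<noteq> b" "a \<noteq> c" "a \<noteq> d" "b \<noteq> c" "b \<noteq> d" "c \<noteq> d"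
    unfolding a_def b_def c_def d_def using idx Cinj by auto
  have uC: "a \<noteq> u1" "b \<noteq> u1" "c \<noteq> u1" "d \<noteq> u1" "a \<noteq> u2" "b \<noteq> u2" "c \<noteq> u2" "d \<noteq> u2"
    unfolding a_def b_def c_def d_def using idx u mem by (metis less_trans)+
  define LX where "LX = seg C ia (ib - ia)"
  define LY where "LY = seg C ib (?n - ib + ia)"
  define LZ where "LZ = [a, u1, b]"
  define LQ where "LQ = [c, u2, d]"
  define LR where "LR = [u2, u1]"
  have sX: "set LX = {C ! j | j. ia \<le> j \<and> j \<le> ib}" unfolding LX_def using idx by (intro setX) auto
  have sY: "set LY = {C ! j | j. j < ?n \<and> (ib \<le> j \<or> j \<le> ia)}" unfolding LY_def using idx by (intro setY) auto
  have inX: "x \<in> set LX \<longleftrightarrow> (\<exists>j. ia \<le> j \<and> j \<le> ib \<and> x = C ! j)" for x unfolding sX by blast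
  have inY: "x \<in> set LY \<longleftrightarrow> (\<exists>j. j < ?n \<and> (ib \<le> j \<or> j \<le> ia) \<and> x = C ! j)" for x unfolding sY by blast
  have XY: "set LX \<inter> set LY \<subseteq> {a, b}"
  proof
    fix x assume "x \<in> set LX \<inter> set LY"
    then obtain j k where j: "ia \<le> j" "j \<le> ib" "x = C ! j" and k: "k < ?n" "ib \<le> k \<or> k \<le> ia" "x = C ! k"
      using inX inY by blast
    have "j = k" using Cinj[of j k] j k idx by simp
    then have "j = ia \<or> j = ib" using j k by auto
    then show "x \<in> {a, b}" using j(3) a_def b_def by auto
  qed
  have cX: "c \<in> set LX" unfolding inX c_def using idx by (intro exI[of _ ic]) auto
  have dY: "d \<in> set LY" unfolding inY d_def using idx by (intro exI[of _ idd]) auto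
  have aX: "a \<in> set LX" unfolding inX a_def using idx by (intro exI[of _ ia]) auto
  have bX: "b \<in> set LX" unfolding inX b_def using idx by (intro exI[of _ ib]) auto
  have aY: "a \<in> set LY" unfolding inY a_def using idx by (intro exI[of _ ia]) auto
  have bY: "b \<in> set LY" unfolding inY b_def using idx by (intro exI[of _ ib]) auto
  have cY: "c \<notin> set LY"
  proof
    assume "c \<in> set LY"
    then obtain k where k: "k < ?n" "ib \<le> k \<or> k \<le> ia" "c = C ! k" using inY by blast
    then have "C ! k = C ! ic" using c_def by simp
    moreover have "ic < ?n" using idx by simp
    ultimately have "k = ic" using Cinj[of k ic] k(1) by blast
    then show False using k idx by auto
  qed
  have dX: "d \<notin> set LX"
  proof
    assume "d \<in> set LX"
    then obtain k where k: "ia \<le> k" "k \<le> ib" "d = C ! k" using inX by blast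
    then have "C ! k = C ! idd" using d_def by simp
    moreover have "k < ?n" "idd < ?n" using idx k by simp_all
    ultimately have "k = idd" using Cinj[of k idd] by blast
    then show False using k idx by auto
  qed
  have LXC: "set LX \<subseteq> set C"
  proof
    fix x assume "x \<in> set LX"
    then obtain j where "j \<le> ib" "x = C ! j" using inX by blast
    then show "x \<in> set C" using idx mem[of j] by simp
  qed
  have LYC: "set LY \<subseteq> set C"
  proof
    fix x assume "x \<in> set LY"
    then obtain j where "j < ?n" "x = C ! j" using inY by blast
    then show "x \<in> set C" using mem[of j] by simp
  qed
  have u1X: "u1 \<notin> set LX" "u2 \<notin> set LX" using LXC u(2,4) by blast+
  have u1Y: "u1 \<notin> set LY" "u2 \<notin> set LY" using LYC u(2,4) by blast+
  have edX: "\<forall>(x, y)\<in>edges LX. x \<notin> set LY \<or> y \<notin> set LY"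
  proof (intro ballI, clarify)
    fix x y assume xy: "(x, y) \<in> edges LX" "x \<in> set LY" "y \<in> set LY"
    obtain t where t: "x = C ! ((ia + t) mod ?n)" "y = C ! ((ia + Suc t) mod ?n)" "t < ib - ia"
      using xy(1) unfolding LX_def seg_edges by blast
    have m1: "(ia + t) mod ?n = ia + t" "(ia + Suc t) mod ?n = ia + Suc t" using t(3) idx by auto
    obtain k where k: "k < ?n" "ib \<le> k \<or> k \<le> ia" "x = C ! k" using xy(2) inY by blast
    obtain l where l: "l < ?n" "ib \<le> l \<or> l \<le> ia" "y = C ! l" using xy(3) inY by blast
    have "k = ia + t" using Cinj[of k "ia + t"] k t m1 idx by simp
    moreover have "l = ia + Suc t" using Cinj[of l "ia + Suc t"] l t m1 idx by simp
    ultimately show False using k(2) l(2) t(3) idx by linarith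
  qed
  have LXd: "distinct LX" "length LX \<ge> 2" "walk E LX"
    unfolding LX_def using idx dC by (auto intro!: seg_distinct seg_walk[OF cyc])
  have LYd: "distinct LY" "length LY \<ge> 2" "walk E LY"
    unfolding LY_def using idx dC by (auto intro!: seg_distinct seg_walk[OF cyc])
  have LZd: "distinct LZ" "length LZ \<ge> 2" "walk E LZ"
    unfolding LZ_def using abcd uC e symE a_def b_def by auto
  have LQd: "distinct LQ" "length LQ \<ge> 2" "walk E LQ"
    unfolding LQ_def using abcd uC e symE c_def d_def by auto
  have LRd: "distinct LR" "length LR \<ge> 2" "walk E LR"
    unfolding LR_def using u12 u(5) symE by auto
  define X where "X = vpath \<gamma> LX"
  define Y where "Y = reversepath (vpath \<gamma> LY)"
  define Z where "Z = vpath \<gamma> LZ"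
  define Q where "Q = vpath \<gamma> LQ"
  define R where "R = vpath \<gamma> LR"
  note PX = vpath_props[OF sg pe LXd]
  note PY = vpath_props[OF sg pe LYd]
  note PZ = vpath_props[OF sg pe LZd]
  note PQ = vpath_props[OF sg pe LQd]
  note PR = vpath_props[OF sg pe LRd]
  have hX: "hd LX = a" "last LX = b" unfolding LX_def a_def b_def using idx by (auto simp: seg_hd seg_last)
  have "(ib + (?n - ib + ia)) mod ?n = ia" using idx by simp
  then have hY: "hd LY = b" "last LY = a" unfolding LY_def a_def b_def using idx by (auto simp: seg_hd seg_last)
  have arcs: "arc X" "arc Y" "arc Z" using PX PY PZ by (auto simp: X_def Y_def Z_def arc_reversepath)
  have ends: "pathstart X = pos a" "pathfinish X = pos b" "pathstart Y = pos a" "pathfinish Y = pos b"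
     "pathstart Z = pos a" "pathfinish Z = pos b"
    using PX PY PZ hX hY by (auto simp: X_def Y_def Z_def LZ_def)
  have iX: "path_image X = path_image (vpath \<gamma> LX)" and iY: "path_image Y = path_image (vpath \<gamma> LY)"
    and iZ: "path_image Z = path_image (vpath \<gamma> LZ)" by (simp_all add: X_def Y_def Z_def)
  have pab: "pos a \<in> path_image X" "pos b \<in> path_image X" "pos a \<in> path_image Y" "pos b \<in> path_image Y"
    "pos a \<in> path_image Z" "pos b \<in> path_image Z"
    using ends by (metis pathstart_in_path_image pathfinish_in_path_image)+
  have "path_image X \<inter> path_image Y \<subseteq> pos ` (set LX \<inter> set LY)"
    unfolding iX iY by (rule vpath_inter[OF sg pe LXd LYd edX])
  then have XYi: "path_image X \<inter> path_image Y = {pos a, pos b}" using XY pab by blast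
  have edZ: "\<forall>(x, y)\<in>edges LZ. x \<notin> set L \<or> y \<notin> set L" if "u1 \<notin> set L" for L
    using that unfolding LZ_def by auto
  have "path_image Z \<inter> path_image X \<subseteq> pos ` (set LZ \<inter> set LX)"
    unfolding iX iZ by (rule vpath_inter[OF sg pe LZd LXd edZ[OF u1X(1)]])
  moreover have "set LZ \<inter> set LX \<subseteq> {a, b}" using u1X unfolding LZ_def by auto
  ultimately have XZi: "path_image X \<inter> path_image Z = {pos a, pos b}" using pab by blast
  have "path_image Z \<inter> path_image Y \<subseteq> pos ` (set LZ \<inter> set LY)"
    unfolding iY iZ by (rule vpath_inter[OF sg pe LZd LYd edZ[OF u1Y(1)]])
  moreover have "set LZ \<inter> set LY \<subseteq> {a, b}" using u1Y unfolding LZ_def by auto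
  ultimately have YZi: "path_image Y \<inter> path_image Z = {pos a, pos b}" using pab by blast
  have edQ: "\<forall>(x, y)\<in>edges LQ. x \<notin> set L \<or> y \<notin> set L" if "u2 \<notin> set L" for L
    using that unfolding LQ_def by auto
  have edR: "\<forall>(x, y)\<in>edges LR. x \<notin> set L \<or> y \<notin> set L" if "u2 \<notin> set L" for L
    using that unfolding LR_def by auto
  have u2Z: "u2 \<notin> set LZ" unfolding LZ_def using u12 uC by auto
  have QX: "path_image Q \<inter> path_image X \<subseteq> {pos c}"
  proof -
    have "path_image Q \<inter> path_image X \<subseteq> pos ` (set LQ \<inter> set LX)"
      unfolding iX Q_def by (rule vpath_inter[OF sg pe LQd LXd edQ[OF u1X(2)]])
    moreover have "set LQ \<inter> set LX \<subseteq> {c}" using u1X dX unfolding LQ_def by auto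
    ultimately show ?thesis by blast
  qed
  have QY: "path_image Q \<inter> path_image Y \<subseteq> {pos d}"
  proof -
    have "path_image Q \<inter> path_image Y \<subseteq> pos ` (set LQ \<inter> set LY)"
      unfolding iY Q_def by (rule vpath_inter[OF sg pe LQd LYd edQ[OF u1Y(2)]])
    moreover have "set LQ \<inter> set LY \<subseteq> {d}" using u1Y cY unfolding LQ_def by auto
    ultimately show ?thesis by blast
  qed
  have QZ: "path_image Q \<inter> path_image Z = {}"
  proof -
    have "path_image Q \<inter> path_image Z \<subseteq> pos ` (set LQ \<inter> set LZ)"
      unfolding iZ Q_def by (rule vpath_inter[OF sg pe LQd LZd edQ[OF u2Z]])
    moreover have "set LQ \<inter> set LZ = {}" using abcd uC u12 unfolding LQ_def LZ_def by auto
    ultimately show ?thesis by blast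
  qed
  have RX: "path_image R \<inter> path_image X = {}"
  proof -
    have "path_image R \<inter> path_image X \<subseteq> pos ` (set LR \<inter> set LX)"
      unfolding iX R_def by (rule vpath_inter[OF sg pe LRd LXd edR[OF u1X(2)]])
    moreover have "set LR \<inter> set LX = {}" using u1X unfolding LR_def by auto
    ultimately show ?thesis by blast
  qed
  have RY: "path_image R \<inter> path_image Y = {}"
  proof -
    have "path_image R \<inter> path_image Y \<subseteq> pos ` (set LR \<inter> set LY)"
      unfolding iY R_def by (rule vpath_inter[OF sg pe LRd LYd edR[OF u1Y(2)]])
    moreover have "set LR \<inter> set LY = {}" using u1Y unfolding LR_def by auto
    ultimately show ?thesis by blast
  qed
  have RZ: "path_image R \<inter> path_image Z \<subseteq> {pos u1}"
  proof -
    have "path_image R \<inter> path_image Z \<subseteq> pos ` (set LR \<inter> set LZ)"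
      unfolding iZ R_def by (rule vpath_inter[OF sg pe LRd LZd edR[OF u2Z]])
    moreover have "set LR \<inter> set LZ \<subseteq> {u1}" using u2Z unfolding LR_def by auto
    ultimately show ?thesis by blast
  qed
  have Qa: "arc Q" "Q 0 = pos c" "Q 1 = pos d" using PQ by (auto simp: Q_def LQ_def pathstart_def pathfinish_def)
  have Ra: "arc R" "R 0 = pos u2" "R 1 = pos u1" using PR by (auto simp: R_def LR_def pathstart_def pathfinish_def)
  have Qinj: "inj_on Q {0..1}" and Rinj: "inj_on R {0..1}" using Qa Ra arc_imp_inj_on by auto
  have Qc: "continuous_on {0..1} Q" and Rc: "continuous_on {0..1} R"
    using arc_imp_path[OF Qa(1)] arc_imp_path[OF Ra(1)] unfolding path_def by auto
  define K where "K = Q ` {0<..<1} \<union> R ` {0..<1}"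
  have K1: "Q ` {0<..<1} \<subseteq> path_image Q - {pos c, pos d}"
  proof
    fix z assume "z \<in> Q ` {0<..<1}"
    then obtain t where t: "t \<in> {0<..<1}" "z = Q t" by blast
    have "Q t \<noteq> Q 0" "Q t \<noteq> Q 1" using t(1) inj_onD[OF Qinj, of t 0] inj_onD[OF Qinj, of t 1] by auto
    then show "z \<in> path_image Q - {pos c, pos d}" using t Qa by (auto simp: path_image_def)
  qed
  have K2: "R ` {0..<1} \<subseteq> path_image R - {pos u1}"
  proof
    fix z assume "z \<in> R ` {0..<1}"
    then obtain t where t: "t \<in> {0..<1}" "z = R t" by blast
    have "R t \<noteq> R 1" using t(1) inj_onD[OF Rinj, of t 1] by auto
    then show "z \<in> path_image R - {pos u1}" using t Ra by (auto simp: path_image_def)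
  qed
  have KQ: "Q ` {0<..<1} \<inter> path_image X = {}" "Q ` {0<..<1} \<inter> path_image Y = {}"
     "Q ` {0<..<1} \<inter> path_image Z = {}"
    using K1 QX QY QZ by blast+
  have KR: "R ` {0..<1} \<inter> path_image X = {}" "R ` {0..<1} \<inter> path_image Y = {}"
     "R ` {0..<1} \<inter> path_image Z = {}"
    using K2 RX RY RZ by blast+
  have Kdis: "K \<inter> (path_image X \<union> path_image Y \<union> path_image Z) = {}"
    unfolding K_def using KQ KR by (simp add: Int_Un_distrib Int_Un_distrib2)
  have posin: "pos u2 \<in> path_image Q" unfolding Q_def by (rule vpath_vertex_in[OF sg pe LQd]) (simp add: LQ_def)
  have u2Q: "pos u2 \<in> Q ` {0<..<1}"
  proof -
    have "pos u2 \<in> Q ` {0..1}" using posin unfolding path_image_def .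
    then obtain t where t': "pos u2 = Q t" "t \<in> {0..1}" by (rule imageE)
    then have t: "t \<in> {0..1}" "Q t = pos u2" by simp_all
    have cV: "c \<in> V" "d \<in> V" using c_def d_def inV idx by auto
    have "pos u2 \<noteq> pos c"
    proof
      assume "pos u2 = pos c" then have "u2 = c" using inj_onD[OF inj _ u(3) cV(1)] by blast
      then show False using uC by simp
    qed
    moreover have "pos u2 \<noteq> pos d"
    proof
      assume "pos u2 = pos d" then have "u2 = d" using inj_onD[OF inj _ u(3) cV(2)] by blast
      then show False using uC by simp
    qed
    ultimately have "t \<noteq> 0" "t \<noteq> 1" using t(2) Qa(2,3) by auto
    then have "t \<in> {0<..<1}" using t(1) by auto
    then show ?thesis using t(2) by (metis image_eqI)
  qed
  have conK: "connected K"
  proof -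
    have "connected (Q ` {0<..<1})"
      by (rule connected_continuous_image) (use Qc in \<open>auto intro: continuous_on_subset\<close>)
    moreover have "connected (R ` {0..<1})"
      by (rule connected_continuous_image) (use Rc in \<open>auto intro: continuous_on_subset\<close>)
    moreover have "pos u2 \<in> R ` {0..<1}" using Ra by force
    ultimately show ?thesis unfolding K_def using u2Q connected_Un by blast
  qed
  have clQ: "Q ` {0..1} \<subseteq> closure K"
  proof -
    have "Q ` closure {0<..<1::real} \<subseteq> closure K"
      by (rule image_closure_subset) (use Qc in \<open>auto simp: K_def intro: closure_subset[THEN subsetD]\<close>)
    then show ?thesis by simp
  qed
  have clR: "R ` {0..1} \<subseteq> closure K"
  proof -
    have "R ` closure {0..<1::real} \<subseteq> closure K"
      by (rule image_closure_subset) (use Rc in \<open>auto simp: K_def intro: closure_subset[THEN subsetD]\<close>)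
    then show ?thesis by simp
  qed
  have aV: "a \<in> V" using inV[of ia] idx unfolding a_def by simp
  have bV: "b \<in> V" using inV[of ib] idx unfolding b_def by simp
  have cV: "c \<in> V" using inV[of ic] idx unfolding c_def by simp
  have dV: "d \<in> V" using inV[of idd] idx unfolding d_def by simp
  have pne: "pos x \<noteq> pos y" if "x \<in> V" "y \<in> V" "x \<noteq> y" for x y
    using inj_onD[OF inj _ that(1,2)] that(3) by blast
  have Q0: "Q 0 \<in> Q ` {0..1}" and Q1: "Q 1 \<in> Q ` {0..1}" and R1: "R 1 \<in> R ` {0..1}" by simp_all
  have x: "pos c \<in> path_image X" "pos c \<notin> {pos a, pos b}" "pos c \<in> closure K"
  proof -
    show "pos c \<in> path_image X" unfolding iX by (rule vpath_vertex_in[OF sg pe LXd cX])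
    show "pos c \<notin> {pos a, pos b}" using pne[OF cV aV] pne[OF cV bV] abcd by auto
    show "pos c \<in> closure K" using subsetD[OF clQ Q0] Qa(2) by simp
  qed
  have y: "pos d \<in> path_image Y" "pos d \<notin> {pos a, pos b}" "pos d \<in> closure K"
  proof -
    show "pos d \<in> path_image Y" unfolding iY by (rule vpath_vertex_in[OF sg pe LYd dY])
    show "pos d \<notin> {pos a, pos b}" using pne[OF dV aV] pne[OF dV bV] abcd by auto
    show "pos d \<in> closure K" using subsetD[OF clQ Q1] Qa(3) by simp
  qed
  have u1Z: "u1 \<in> set LZ" unfolding LZ_def by simp
  have z: "pos u1 \<in> path_image Z" "pos u1 \<notin> {pos a, pos b}" "pos u1 \<in> closure K"
  proof -
    show "pos u1 \<in> path_image Z" unfolding iZ by (rule vpath_vertex_in[OF sg pe LZd u1Z])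
    show "pos u1 \<notin> {pos a, pos b}" using pne[OF u(1) aV] pne[OF u(1) bV] uC by auto
    show "pos u1 \<in> closure K" using subsetD[OF clR R1] Ra(3) by simp
  qed
  show False
    by (rule theta_contra[OF arcs ends XYi XZi YZi conK Kdis x y z])
qed




definition bad3 :: "nat \<Rightarrow> bool" where "bad3 k = (k = 4 \<or> k = 7 \<or> k = 9)"

definition claw_ok :: "nat \<Rightarrow> nat \<Rightarrow> nat \<Rightarrow> nat \<Rightarrow> bool" where
  "claw_ok n i j k = (
    (\<not> bad3 n \<and> \<not> bad3 (DD n i j + 2) \<and> \<not> bad3 (DD n j k + 2) \<and> \<not> bad3 (DD n k i + 2)
      \<and> \<not> bad3 (DD n j i + 2) \<and> \<not> bad3 (DD n k j + 2) \<and> \<not> bad3 (DD n i k + 2)) \<longrightarrow>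
    (n = 12 \<and> (sort [j - i + 2, k - j + 2, n + i - k + 2] = [3, 5, 10] \<or>
                sort [j - i + 2, k - j + 2, n + i - k + 2] = [5, 5, 8] \<or>
                sort [j - i + 2, k - j + 2, n + i - k + 2] = [6, 6, 6]))
    \<or> (n = 13 \<and> sort [j - i + 2, k - j + 2, n + i - k + 2] = [3, 5, 11]))"

lemma claw_check: "list_all (\<lambda>n. list_all (\<lambda>i. list_all (\<lambda>j. list_all (\<lambda>k. claw_ok n i j k)
   [Suc j..<n]) [Suc i..<n]) [0..<n]) [0..<14]"
  by code_simp

definition tbl :: "nat \<Rightarrow> nat \<Rightarrow> nat \<Rightarrow> nat \<Rightarrow> nat \<Rightarrow> bool" where
  "tbl n p1 p2 q1 q2 = (DD n p1 p2 + DD n p2 q1 + DD n q1 q2 + DD n q2 p1 = n \<and> 0 < DD n p1 p2 \<and> 0 < DD n q1 q2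
     \<and> sort [DD n p1 p2 + 2, DD n p2 q1 + 3, DD n q1 q2 + 2, DD n q2 p1 + 3] = [5, 5, 5, 8])"

definition concl_b :: "nat \<Rightarrow> nat \<Rightarrow> nat \<Rightarrow> nat \<Rightarrow> nat \<Rightarrow> bool" where
  "concl_b n a b c d = ((n = 12 \<and> (a < c \<and> c < b \<and> b < d \<or> c < a \<and> a < d \<and> d < b))
    \<or> (n = 13 \<and> (tbl n a b c d \<or> tbl n a b d c \<or> tbl n b a c d \<or> tbl n b a d c)))"

definition P1 where "P1 n a b = (\<not> bad3 (DD n a b + 2) \<and> \<not> bad3 (DD n b a + 2))"
definition P2 where "P2 n a b c = (\<not> bad3 (DD n c a + 3) \<and> \<not> bad3 (DD n a c + 3) \<and> \<not> bad3 (DD n c b + 3) \<and> \<not> bad3 (DD n b c + 3))"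
definition P3 where "P3 n a b c d = (\<not> (a = c \<and> b = d) \<and> \<not> bad3 (DD n c d + 2) \<and> \<not> bad3 (DD n d c + 2) \<and>
     \<not> bad3 (DD n d a + 3) \<and> \<not> bad3 (DD n a d + 3) \<and> \<not> bad3 (DD n d b + 3) \<and> \<not> bad3 (DD n b d + 3))"

definition chkb :: "nat \<Rightarrow> bool" where
 "chkb n = (if bad3 n then True else
    list_all (\<lambda>a. list_all (\<lambda>b. if P1 n a b then list_all (\<lambda>c. if P2 n a b c then
      list_all (\<lambda>d. if P3 n a b c d then concl_b n a b c d else True) [Suc c..<n] else True) [0..<n] else True)
    [Suc a..<n]) [0..<n])"

lemma bic_check: "list_all chkb [0..<14]"
  by code_simp

lemma list_all_upt: "list_all P [a..<b] \<longleftrightarrow> (\<forall>x. a \<le> x \<and> x < b \<longrightarrow> P x)"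
  by (auto simp: list_all_iff)

lemma claw_arith:
  assumes "i < j" "j < k" "k < n" "n < 14"
    "\<not> bad3 n" "\<not> bad3 (DD n i j + 2)" "\<not> bad3 (DD n j k + 2)" "\<not> bad3 (DD n k i + 2)"
    "\<not> bad3 (DD n j i + 2)" "\<not> bad3 (DD n k j + 2)" "\<not> bad3 (DD n i k + 2)"
  shows "(n = 12 \<and> (sort [j - i + 2, k - j + 2, n + i - k + 2] = [3, 5, 10] \<or>
                sort [j - i + 2, k - j + 2, n + i - k + 2] = [5, 5, 8] \<or>
                sort [j - i + 2, k - j + 2, n + i - k + 2] = [6, 6, 6]))
    \<or> (n = 13 \<and> sort [j - i + 2, k - j + 2, n + i - k + 2] = [3, 5, 11])"
proof -
  have "claw_ok n i j k" using claw_check assms(1-4) unfolding list_all_upt by auto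
  then show ?thesis using assms(5-) unfolding claw_ok_def by blast
qed

lemma bic_arith:
  assumes "a < b" "b < n" "c < d" "d < n" "n < 14" "\<not> bad3 n" "\<not> (a = c \<and> b = d)"
    "\<not> bad3 (DD n a b + 2)" "\<not> bad3 (DD n b a + 2)" "\<not> bad3 (DD n c d + 2)" "\<not> bad3 (DD n d c + 2)"
    "\<not> bad3 (DD n c a + 3)" "\<not> bad3 (DD n a c + 3)" "\<not> bad3 (DD n d a + 3)" "\<not> bad3 (DD n a d + 3)"
    "\<not> bad3 (DD n c b + 3)" "\<not> bad3 (DD n b c + 3)" "\<not> bad3 (DD n d b + 3)" "\<not> bad3 (DD n b d + 3)"
  shows "concl_b n a b c d"
proof -
  have "chkb n" using bic_check assms(5) unfolding list_all_upt by auto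
  then have "list_all (\<lambda>a. list_all (\<lambda>b. if P1 n a b then list_all (\<lambda>c. if P2 n a b c then
      list_all (\<lambda>d. if P3 n a b c d then concl_b n a b c d else True) [Suc c..<n] else True) [0..<n] else True)
    [Suc a..<n]) [0..<n]" using assms(6) unfolding chkb_def by simp
  then have "if P1 n a b then list_all (\<lambda>c. if P2 n a b c then
      list_all (\<lambda>d. if P3 n a b c d then concl_b n a b c d else True) [Suc c..<n] else True) [0..<n] else True"
    using assms(1,2) unfolding list_all_upt by auto
  moreover have "P1 n a b" using assms unfolding P1_def by simp
  ultimately have "if P2 n a b c then
      list_all (\<lambda>d. if P3 n a b c d then concl_b n a b c d else True) [Suc c..<n] else True"
    using assms(3,4) unfolding list_all_upt by auto
  moreover have "P2 n a b c" using assms unfolding P2_def by simp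
  ultimately have "if P3 n a b c d then concl_b n a b c d else True"
    using assms(3,4) unfolding list_all_upt by auto
  moreover have "P3 n a b c d" using assms unfolding P3_def by simp
  ultimately show ?thesis by simp
qed



lemma mset3: "sort [x, y, z] = [p, q, r] \<Longrightarrow> {#x, y, z#} = {#p, q, r#}"
  by (metis mset_sort mset.simps(1) mset.simps(2))

lemma mset4: "sort [x, y, z, w] = [p, q, r, s] \<Longrightarrow> {#x, y, z, w#} = {#p, q, r, s#}"
  by (metis mset_sort mset.simps(1) mset.simps(2))

lemma tbl_typed:
  assumes u: "u1 \<in> V" "u2 \<in> V" "u1 \<notin> set C" "u2 \<notin> set C" "E u1 u2"
    and p: "p1 < length C" "p2 < length C" "q1 < length C" "q2 < length C"
    and e: "E u1 (C ! p1)" "E u1 (C ! p2)" "E u2 (C ! q1)" "E u2 (C ! q2)"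
    and t: "tbl (length C) p1 p2 q1 q2"
  shows "has_typed_biclaw V E C {#5, 5, 5, 8#}"
proof -
  let ?n = "length C"
  define i2 where "i2 = p1 + DD ?n p1 p2"
  define i3 where "i3 = i2 + DD ?n p2 q1"
  define i4 where "i4 = i3 + DD ?n q1 q2"
  have ts: "DD ?n p1 p2 + DD ?n p2 q1 + DD ?n q1 q2 + DD ?n q2 p1 = ?n" "0 < DD ?n p1 p2" "0 < DD ?n q1 q2"
    and so: "sort [DD ?n p1 p2 + 2, DD ?n p2 q1 + 3, DD ?n q1 q2 + 2, DD ?n q2 p1 + 3] = [5, 5, 5, 8]"
    using t unfolding tbl_def by auto
  have m2: "i2 mod ?n = p2" unfolding i2_def using DD_add p by blast
  have m3: "i3 mod ?n = q1"
  proof -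
    have "i3 mod ?n = (i2 mod ?n + DD ?n p2 q1) mod ?n" unfolding i3_def by (simp add: mod_add_left_eq)
    then show ?thesis using m2 DD_add p by simp
  qed
  have m4: "i4 mod ?n = q2"
  proof -
    have "i4 mod ?n = (i3 mod ?n + DD ?n q1 q2) mod ?n" unfolding i4_def by (simp add: mod_add_left_eq)
    then show ?thesis using m3 DD_add p by simp
  qed
  have ord: "p1 < i2" "i2 \<le> i3" "i3 < i4" "i4 \<le> p1 + ?n" using ts unfolding i2_def i3_def i4_def by linarith+
  have eqs: "i2 - p1 + 2 = DD ?n p1 p2 + 2" "i3 - i2 + 3 = DD ?n p2 q1 + 3" "i4 - i3 + 2 = DD ?n q1 q2 + 2"
     "p1 + ?n - i4 + 3 = DD ?n q2 p1 + 3" using ts unfolding i2_def i3_def i4_def by linarith+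
  have M: "{#i2 - p1 + 2, i3 - i2 + 3, i4 - i3 + 2, p1 + ?n - i4 + 3#} = {#5, 5, 5, 8#}"
    unfolding eqs by (rule mset4[OF so])
  show ?thesis unfolding has_typed_biclaw_def
    by (rule exI[of _ u1], rule exI[of _ u2], rule exI[of _ p1], rule exI[of _ i2], rule exI[of _ i3], rule exI[of _ i4])
       (use u p e ord M m2 m3 m4 in simp)
qed


lemma sort3:
  fixes p q r :: nat
  assumes "p \<noteq> q" "p \<noteq> r" "q \<noteq> r" "P p" "P q" "P r"
  shows "\<exists>i j k. i < j \<and> j < k \<and> P i \<and> P j \<and> P k"
proof (cases p q rule: linorder_cases)
  case less
  then show ?thesis
  proof (cases q r rule: linorder_cases)
    case less then show ?thesis using \<open>p < q\<close> assms by blast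
  next
    case equal then show ?thesis using assms by simp
  next
    case greater
    then show ?thesis
    proof (cases p r rule: linorder_cases)
      case less then show ?thesis using \<open>r < q\<close> assms by blast
    next
      case equal then show ?thesis using assms by simp
    next
      case greater then show ?thesis using \<open>p < q\<close> assms by blast
    qed
  qed
next
  case equal then show ?thesis using assms by simp
next
  case greater
  then show ?thesis
  proof (cases p r rule: linorder_cases)
    case less then show ?thesis using \<open>q < p\<close> assms by blast
  next
    case equal then show ?thesis using assms by simp
  next
    case greater
    then show ?thesis
    proof (cases q r rule: linorder_cases)
      case less then show ?thesis using \<open>r < p\<close> assms by blast
    next
      case equal then show ?thesis using assms by simp
    next
      case greater then show ?thesis using \<open>q < p\<close> \<open>r < q\<close> assms by blast
    qed
  qed
qed

lemma apex_len:
  assumes sg: "simple_graph V E" and cyc: "is_cycle V E C" and v: "v \<in> V" "v \<notin> set C"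
    and nf: "\<forall>D. is_cycle V E D \<longrightarrow> \<not> bad3 (length D)"
    and xy: "x < length C" "y < length C" "x \<noteq> y" and e: "E v (C ! x)" "E v (C ! y)"
  shows "\<not> bad3 (DD (length C) x y + 2)"
proof -
  let ?m = "DD (length C) x y"
  have n: "0 < length C" using xy(1) by (rule le_less_trans[OF le0])
  have "?m \<noteq> 0" using DD_zero[OF xy(1,2)] xy(3) by simp
  then have m1: "1 \<le> ?m" by simp
  have m2: "?m < length C" using DD_less[OF n] .
  have "(x + ?m) mod length C = y" using DD_add[OF xy(1,2)] .
  then have e2: "E v (C ! ((x + ?m) mod length C))" using e(2) by simp
  note ac = apex_cycle[OF sg cyc v m1 m2 xy(1) e(1) e2]
  show ?thesis using nf ac by metis
qed

lemma apex2_len: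
  assumes sg: "simple_graph V E" and cyc: "is_cycle V E C" and u: "u1 \<in> V" "u1 \<notin> set C" "u2 \<in> V" "u2 \<notin> set C"
    and e0: "E u1 u2"
    and nf: "\<forall>D. is_cycle V E D \<longrightarrow> \<not> bad3 (length D)"
    and xy: "x < length C" "y < length C" and e: "E u1 (C ! x)" "E u2 (C ! y)"
  shows "\<not> bad3 (DD (length C) y x + 3)"
proof -
  let ?m = "DD (length C) y x"
  have n: "0 < length C" using xy(1) by (rule le_less_trans[OF le0])
  have m2: "?m < length C" using DD_less[OF n] .
  have "(y + ?m) mod length C = x" using DD_add[OF xy(2,1)] .
  then have e2: "E u1 (C ! ((y + ?m) mod length C))" using e(1) by simp
  note ac = apex2_cycle[OF sg cyc u e0 m2 xy(2) e(2) e2]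
  show ?thesis using nf ac by metis
qed


lemma claw_case:
  assumes sg: "simple_graph V E" and cyc: "is_cycle V E C" and n13: "length C \<le> 13"
    and nf: "\<forall>D. is_cycle V E D \<longrightarrow> \<not> bad3 (length D)" and cl: "has_claw V E C"
  shows "length C \<in> {12, 13} \<and>
    (length C = 12 \<longrightarrow>
       has_typed_claw V E C {#3, 5, 10#} \<or> has_typed_claw V E C {#5, 5, 8#} \<or>
       has_typed_claw V E C {#6, 6, 6#}) \<and>
    (length C = 13 \<longrightarrow>
       has_typed_claw V E C {#3, 5, 11#} \<or> has_typed_biclaw V E C {#5, 5, 5, 8#})"
proof -
  let ?n = "length C"
  obtain v v1 v2 v3 where v: "v \<in> V" "v \<notin> set C" and vs: "v1 \<in> set C" "v2 \<in> set C" "v3 \<in> set C"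
    "v1 \<noteq> v2" "v1 \<noteq> v3" "v2 \<noteq> v3" and e: "E v v1" "E v v2" "E v v3"
    using cl unfolding has_claw_def by blast
  obtain p where p: "p < ?n" "C ! p = v1" using vs(1) by (metis in_set_conv_nth)
  obtain q where q: "q < ?n" "C ! q = v2" using vs(2) by (metis in_set_conv_nth)
  obtain r where r: "r < ?n" "C ! r = v3" using vs(3) by (metis in_set_conv_nth)
  have "p \<noteq> q" "p \<noteq> r" "q \<noteq> r" using p q r vs by auto
  from sort3[OF this, of "\<lambda>x. x < ?n \<and> E v (C ! x)"]
  obtain i j k where ijk: "i < j" "j < k" "k < ?n" "E v (C ! i)" "E v (C ! j)" "E v (C ! k)"
    using p q r e by auto
  have nb: "\<not> bad3 ?n" using nf cyc by blast
  have il: "i < ?n" "j < ?n" using ijk by simp_all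
  note al = apex_len[OF sg cyc v nf]
  have c1: "\<not> bad3 (DD ?n i j + 2)" by (rule al) (use ijk in auto)
  have c2: "\<not> bad3 (DD ?n j k + 2)" by (rule al) (use ijk in auto)
  have c3: "\<not> bad3 (DD ?n k i + 2)" by (rule al) (use ijk in auto)
  have c4: "\<not> bad3 (DD ?n j i + 2)" by (rule al) (use ijk in auto)
  have c5: "\<not> bad3 (DD ?n k j + 2)" by (rule al) (use ijk in auto)
  have c6: "\<not> bad3 (DD ?n i k + 2)" by (rule al) (use ijk in auto)
  have ar: "(?n = 12 \<and> (sort [j - i + 2, k - j + 2, ?n + i - k + 2] = [3, 5, 10] \<or>
                sort [j - i + 2, k - j + 2, ?n + i - k + 2] = [5, 5, 8] \<or>
                sort [j - i + 2, k - j + 2, ?n + i - k + 2] = [6, 6, 6]))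
    \<or> (?n = 13 \<and> sort [j - i + 2, k - j + 2, ?n + i - k + 2] = [3, 5, 11])"
    by (rule claw_arith[OF ijk(1-3) _ nb c1 c2 c3 c4 c5 c6]) (use n13 in simp)
  have tc: "has_typed_claw V E C M" if "{#j - i + 2, k - j + 2, ?n + i - k + 2#} = M" for M
    unfolding has_typed_claw_def
    by (rule exI[of _ v], rule exI[of _ i], rule exI[of _ j], rule exI[of _ k]) (use v ijk that in simp)
  from ar show ?thesis
  proof (elim disjE conjE)
    assume "?n = 12" "sort [j - i + 2, k - j + 2, ?n + i - k + 2] = [3, 5, 10]"
    then show ?thesis using tc[OF mset3] by simp
  next
    assume "?n = 12" "sort [j - i + 2, k - j + 2, ?n + i - k + 2] = [5, 5, 8]"
    then show ?thesis using tc[OF mset3] by simp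
  next
    assume "?n = 12" "sort [j - i + 2, k - j + 2, ?n + i - k + 2] = [6, 6, 6]"
    then show ?thesis using tc[OF mset3] by simp
  next
    assume "?n = 13" "sort [j - i + 2, k - j + 2, ?n + i - k + 2] = [3, 5, 11]"
    then show ?thesis using tc[OF mset3] by simp
  qed
qed


lemma biclaw_case:
  assumes sg: "simple_graph V E" and pe: "plane_embedding V E pos \<gamma>" and cyc: "is_cycle V E C"
    and n13: "length C \<le> 13"
    and nf: "\<forall>D. is_cycle V E D \<longrightarrow> \<not> bad3 (length D)" and bc: "has_biclaw V E C"
  shows "length C = 13 \<and> has_typed_biclaw V E C {#5, 5, 5, 8#}"
proof -
  let ?n = "length C"
  obtain u1 u2 x1 x2 y1 y2 where u: "u1 \<in> V" "u2 \<in> V" "u1 \<notin> set C" "u2 \<notin> set C" "E u1 u2"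
    and xs: "x1 \<in> set C" "x2 \<in> set C" "y1 \<in> set C" "y2 \<in> set C" "x1 \<noteq> x2" "y1 \<noteq> y2"
    and e: "E u1 x1" "E u1 x2" "E u2 y1" "E u2 y2"
    using bc unfolding has_biclaw_def by blast
  obtain p1 where p1: "p1 < ?n" "C ! p1 = x1" using xs(1) by (metis in_set_conv_nth)
  obtain p2 where p2: "p2 < ?n" "C ! p2 = x2" using xs(2) by (metis in_set_conv_nth)
  obtain q1 where q1: "q1 < ?n" "C ! q1 = y1" using xs(3) by (metis in_set_conv_nth)
  obtain q2 where q2: "q2 < ?n" "C ! q2 = y2" using xs(4) by (metis in_set_conv_nth)
  have "p1 \<noteq> p2" "q1 \<noteq> q2" using p1 p2 q1 q2 xs by auto
  define a where "a = min p1 p2"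
  define b where "b = max p1 p2"
  define c where "c = min q1 q2"
  define d where "d = max q1 q2"
  have ab: "a < b" "b < ?n" using \<open>p1 \<noteq> p2\<close> p1 p2 unfolding a_def b_def by auto
  have cd: "c < d" "d < ?n" using \<open>q1 \<noteq> q2\<close> q1 q2 unfolding c_def d_def by auto
  have an: "a < ?n" using ab by simp
  have cn: "c < ?n" using cd by simp
  have ea: "E u1 (C ! a)" "E u1 (C ! b)" using e p1 p2 unfolding a_def b_def by (auto simp: min_def max_def)
  have ec: "E u2 (C ! c)" "E u2 (C ! d)" using e q1 q2 unfolding c_def d_def by (auto simp: min_def max_def)
  have symE: "E y x" if "E x y" for x y using sg that by (auto simp: simple_graph_def)
  have nb: "\<not> bad3 ?n" using nf cyc by blast
  have dC: "distinct C" "set C \<subseteq> V" using cyc by (auto simp: is_cycle_def)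
  have u12: "u1 \<noteq> u2" using sg u(5) by (auto simp: simple_graph_def)
  have no4: "\<not> (a = c \<and> b = d)"
  proof
    assume h: "a = c \<and> b = d"
    have "C ! a \<noteq> C ! b" using ab dC(1) nth_eq_iff_index_eq by (metis less_trans less_irrefl)
    moreover have "C ! a \<in> set C" "C ! b \<in> set C" using ab by auto
    ultimately have "is_cycle V E [u1, C ! a, u2, C ! b]"
      unfolding is_cycle_alt using u u12 ea ec h symE dC(2) by auto
    then show False using nf unfolding bad3_def by fastforce
  qed
  note al1 = apex_len[OF sg cyc u(1) u(3) nf]
  note al2 = apex_len[OF sg cyc u(2) u(4) nf]
  have h1: "\<not> bad3 (DD ?n a b + 2)" "\<not> bad3 (DD ?n b a + 2)"
    using al1[of a b] al1[of b a] ab ea by auto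
  have h2: "\<not> bad3 (DD ?n c d + 2)" "\<not> bad3 (DD ?n d c + 2)"
    using al2[of c d] al2[of d c] cd ec by auto
  note bl1 = apex2_len[OF sg cyc u(1) u(3) u(2) u(4) u(5) nf]
  note bl2 = apex2_len[OF sg cyc u(2) u(4) u(1) u(3) symE[OF u(5)] nf]
  have h3: "\<not> bad3 (DD ?n c a + 3)" "\<not> bad3 (DD ?n d a + 3)" "\<not> bad3 (DD ?n c b + 3)" "\<not> bad3 (DD ?n d b + 3)"
    using bl1[of a c] bl1[of a d] bl1[of b c] bl1[of b d] ab cd ea ec by auto
  have h4: "\<not> bad3 (DD ?n a c + 3)" "\<not> bad3 (DD ?n a d + 3)" "\<not> bad3 (DD ?n b c + 3)" "\<not> bad3 (DD ?n b d + 3)"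
    using bl2[of c a] bl2[of d a] bl2[of c b] bl2[of d b] ab cd ea ec by auto
  have "concl_b ?n a b c d"
    by (rule bic_arith[OF ab cd _ nb no4 h1 h2 h3(1) h4(1) h3(2) h4(2) h3(3) h4(3) h3(4) h4(4)]) (use n13 in simp)
  then have "(?n = 12 \<and> (a < c \<and> c < b \<and> b < d \<or> c < a \<and> a < d \<and> d < b))
    \<or> (?n = 13 \<and> (tbl ?n a b c d \<or> tbl ?n a b d c \<or> tbl ?n b a c d \<or> tbl ?n b a d c))"
    unfolding concl_b_def .
  then show ?thesis
  proof (elim disjE conjE)
    assume "a < c" "c < b" "b < d"
    then show ?thesis using interleave_contra[OF sg pe cyc u(1,3,2,4,5) _ _ _ _ ea ec] cd by blast
  next
    assume "c < a" "a < d" "d < b"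
    then show ?thesis using interleave_contra[OF sg pe cyc u(2,4,1,3) symE[OF u(5)] _ _ _ _ ec ea] ab by blast
  next
    assume "?n = 13" "tbl ?n a b c d" then show ?thesis using tbl_typed[OF u an ab(2) cn cd(2) ea ec] by simp
  next
    assume "?n = 13" "tbl ?n a b d c" then show ?thesis using tbl_typed[OF u an ab(2) cd(2) cn ea ec(2,1)] by simp
  next
    assume "?n = 13" "tbl ?n b a c d" then show ?thesis using tbl_typed[OF u ab(2) an cn cd(2) ea(2,1) ec] by simp
  next
    assume "?n = 13" "tbl ?n b a d c" then show ?thesis using tbl_typed[OF u ab(2) an cd(2) cn ea(2,1) ec(2,1)] by simp
  qed
qed


theorem lemma2p2:
  fixes V :: "'a set" and E :: "'a \<Rightarrow> 'a \<Rightarrow> bool" and C :: "'a list"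
  assumes "simple_graph V E"
    and "planar V E"
    and "connected_graph V E"
    and "\<forall>D. is_cycle V E D \<longrightarrow> length D \<notin> {4, 7, 9}"
    and "bad_cycle V E C"
  shows "length C \<in> {12, 13} \<and>
    (length C = 12 \<longrightarrow>
       has_typed_claw V E C {#3, 5, 10#} \<or> has_typed_claw V E C {#5, 5, 8#} \<or>
       has_typed_claw V E C {#6, 6, 6#}) \<and>
    (length C = 13 \<longrightarrow>
       has_typed_claw V E C {#3, 5, 11#} \<or> has_typed_biclaw V E C {#5, 5, 5, 8#})"
proof -
  obtain pos \<gamma> where pe: "plane_embedding V E pos \<gamma>" using assms(2) unfolding planar_def by blast
  have cyc: "is_cycle V E C" and n13: "length C \<le> 13" and cb: "has_claw V E C \<or> has_biclaw V E C"
    using assms(5) unfolding bad_cycle_def good_cycle_def by auto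
  have nf: "\<forall>D. is_cycle V E D \<longrightarrow> \<not> bad3 (length D)" using assms(4) unfolding bad3_def by auto
  from cb show ?thesis
  proof
    assume "has_claw V E C"
    then show ?thesis using claw_case[OF assms(1) cyc n13 nf] by blast
  next
    assume "has_biclaw V E C"
    then show ?thesis using biclaw_case[OF assms(1) pe cyc n13 nf] by auto
  qed
qed

end
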